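(* Let $k$ be a positive integer and let $G$ and $G'$ be non-regular graphs with maximum degree $2$ that have the same number of vertices and the same number of edges. If every cycle (component) in $G$ and $G'$ has more than $k$ vertices and every path component of $G$ and $G'$ has at least $k-1$ vertices, then $\mathcal{D}_k(G)=\mathcal{D}_k(G')$.
   Context: The $k$-deck $\mathcal{D}_k(G)$ is the multiset of isomorphism classes of the induced subgraphs of $G$ on $k$ vertices. A graph of maximum degree $2$ has components that are paths and cycles. *)

theory Defs
  imports Main
begin

type_synonym 'a graph = "'a set \<times> 'a set set"

definition simple_graph :: "'a graph \<Rightarrow> bool" where
  "simple_graph G \<longleftrightarrow> finite (fst G) \<and>
     (\<forall>e\<in>snd G. \<exists>u v. u \<noteq> v \<and> e = {u, v} \<and> u \<in> fst G \<and> v \<in> fst G)"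

definition degree :: "'a graph \<Rightarrow> 'a \<Rightarrow> nat" where
  "degree G v = card {u \<in> fst G. {u, v} \<in> snd G}"

definition max_degree_two :: "'a graph \<Rightarrow> bool" where
  "max_degree_two G \<longleftrightarrow> (\<forall>v\<in>fst G. degree G v \<le> 2) \<and> (\<exists>v\<in>fst G. degree G v = 2)"

definition regular :: "'a graph \<Rightarrow> bool" where
  "regular G \<longleftrightarrow> (\<forall>u\<in>fst G. \<forall>v\<in>fst G. degree G u = degree G v)"

definition induced :: "'a graph \<Rightarrow> 'a set \<Rightarrow> 'a graph" where
  "induced G S = (S, {e \<in> snd G. e \<subseteq> S})"

definition graph_iso :: "'a graph \<Rightarrow> 'b graph \<Rightarrow> bool" where
  "graph_iso G H \<longleftrightarrow> (\<exists>f. bij_betw f (fst G) (fst H) \<and>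
     (\<forall>u\<in>fst G. \<forall>v\<in>fst G. {u, v} \<in> snd G \<longleftrightarrow> {f u, f v} \<in> snd H))"

text \<open>Multiplicity of the isomorphism class of H in the k-deck of G.\<close>
definition deck_count :: "'a graph \<Rightarrow> nat \<Rightarrow> nat graph \<Rightarrow> nat" where
  "deck_count G k H = card {S. S \<subseteq> fst G \<and> card S = k \<and> graph_iso (induced G S) H}"

text \<open>Equality of k-decks (as multisets of isomorphism classes): every isomorphism
  class, represented by a graph on natural numbers, occurs equally often.\<close>
definition same_deck :: "nat \<Rightarrow> 'a graph \<Rightarrow> 'b graph \<Rightarrow> bool" where
  "same_deck k G G' \<longleftrightarrow> (\<forall>H :: nat graph. deck_count G k H = deck_count G' k H)"

definition adj :: "'a graph \<Rightarrow> ('a \<times> 'a) set" where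
  "adj G = {(u, v). {u, v} \<in> snd G}"

definition component :: "'a graph \<Rightarrow> 'a \<Rightarrow> 'a set" where
  "component G v = {u. (v, u) \<in> (adj G)\<^sup>*}"

definition components :: "'a graph \<Rightarrow> 'a set set" where
  "components G = component G ` fst G"

text \<open>In a graph of maximum degree 2, a component is a cycle iff all its vertices have
  degree 2; otherwise it is a path (possibly a single vertex).\<close>
definition cycle_component :: "'a graph \<Rightarrow> 'a set \<Rightarrow> bool" where
  "cycle_component G C \<longleftrightarrow> C \<in> components G \<and> (\<forall>v\<in>C. degree G v = 2)"

definition path_component :: "'a graph \<Rightarrow> 'a set \<Rightarrow> bool" where
  "path_component G C \<longleftrightarrow> C \<in> components G \<and> \<not> (\<forall>v\<in>C. degree G v = 2)"

end

theory Submission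
  imports Defs "HOL-Library.Multiset"
begin

definition adjS :: "'a graph \<Rightarrow> 'a set \<Rightarrow> ('a \<times> 'a) set" where
  "adjS G X = {(u,v). u \<in> X \<and> v \<in> X \<and> {u,v} \<in> snd G}"
definition conn :: "'a graph \<Rightarrow> 'a set \<Rightarrow> bool" where
  "conn G X \<longleftrightarrow> X \<subseteq> fst G \<and> X \<noteq> {} \<and> (\<forall>x\<in>X. \<forall>y\<in>X. (x,y) \<in> (adjS G X)\<^sup>*)"
definition sep :: "'a graph \<Rightarrow> 'a set \<Rightarrow> 'a set \<Rightarrow> bool" where
  "sep G X Y \<longleftrightarrow> X \<inter> Y = {} \<and> (\<forall>x\<in>X. \<forall>y\<in>Y. {x,y} \<notin> snd G)"
definition ipath :: "'a graph \<Rightarrow> 'a list \<Rightarrow> bool" where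
  "ipath G s \<longleftrightarrow> distinct s \<and> set s \<subseteq> fst G \<and>
     (\<forall>i<length s. \<forall>j<length s. ({s!i, s!j} \<in> snd G \<longleftrightarrow> (j = Suc i \<or> i = Suc j)))"

lemma adjS_sym: "(u,v) \<in> adjS G X \<Longrightarrow> (v,u) \<in> adjS G X"
  by (auto simp: adjS_def insert_commute)

lemma sym_adjS: "sym (adjS G X)"
  by (auto simp: sym_def adjS_def insert_commute)

lemma rtr_sym: "(x,y) \<in> (adjS G X)\<^sup>* \<Longrightarrow> (y,x) \<in> (adjS G X)\<^sup>*"
  using sym_adjS sym_rtrancl by (metis symD)

lemma adjS_mono: "X \<subseteq> Y \<Longrightarrow> adjS G X \<subseteq> adjS G Y"
  by (auto simp: adjS_def)

lemma rtr_mono: "X \<subseteq> Y \<Longrightarrow> (x,y) \<in> (adjS G X)\<^sup>* \<Longrightarrow> (x,y) \<in> (adjS G Y)\<^sup>*"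
  using rtrancl_mono[OF adjS_mono[of X Y G]] by blast

lemma adjS_adj: "adjS G X \<subseteq> adj G"
  by (auto simp: adjS_def adj_def)

lemma rtr_adj: "(x,y) \<in> (adjS G X)\<^sup>* \<Longrightarrow> (x,y) \<in> (adj G)\<^sup>*"
  using rtrancl_mono[OF adjS_adj[of G X]] by blast

lemma rtr_exit:
  assumes "(x,z) \<in> R\<^sup>*" "x \<in> A" "z \<notin> A"
  shows "\<exists>y w. (y,w) \<in> R \<and> y \<in> A \<and> w \<notin> A"
  using assms by (induction rule: rtrancl_induct) auto

locale mdg =
  fixes G :: "'a graph" and k :: nat
  assumes sg: "simple_graph G"
    and deg2: "\<forall>v\<in>fst G. degree G v \<le> 2"
    and cyc: "\<And>C. cycle_component G C \<Longrightarrow> card C > k"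
    and pth: "\<And>C. path_component G C \<Longrightarrow> card C \<ge> k - 1"
begin

lemma finV: "finite (fst G)"
  using sg by (simp add: simple_graph_def)

lemma edge: "{u,v} \<in> snd G \<Longrightarrow> u \<in> fst G \<and> v \<in> fst G \<and> u \<noteq> v"
  using sg unfolding simple_graph_def by (metis doubleton_eq_iff)

lemma noloop: "{u,u} \<notin> snd G"
  using edge by blast

lemma nb_card: "x \<in> fst G \<Longrightarrow> card {u\<in>fst G. {u,x} \<in> snd G} \<le> 2"
  using deg2 by (simp add: degree_def)

lemma nb2:
  assumes "y \<noteq> z" "{y,x} \<in> snd G" "{z,x} \<in> snd G"
  shows "degree G x = 2 \<and> (\<forall>u. {u,x} \<in> snd G \<longrightarrow> u = y \<or> u = z)"
proof -
  have x: "x \<in> fst G" using edge assms by blast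
  let ?N = "{u\<in>fst G. {u,x} \<in> snd G}"
  have sub: "{y,z} \<subseteq> ?N" using assms edge by blast
  have fin: "finite ?N" using finV by simp
  have c2: "card {y,z} = 2" using assms by simp
  have "card ?N \<le> 2" using nb_card x by simp
  hence eq: "{y,z} = ?N" using card_subset_eq[OF fin sub] c2 card_mono[OF fin sub] by simp
  show ?thesis
  proof
    show "degree G x = 2" unfolding degree_def using eq c2 by simp
    show "\<forall>u. {u,x} \<in> snd G \<longrightarrow> u = y \<or> u = z"
    proof (intro allI impI)
      fix u assume "{u,x} \<in> snd G"
      hence "u \<in> ?N" using edge by blast
      thus "u = y \<or> u = z" using eq by blast
    qed
  qed
qed

lemma nb1:
  assumes "degree G x \<le> 1" "{y,x} \<in> snd G" "{u,x} \<in> snd G"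
  shows "u = y"
proof (rule ccontr)
  assume "u \<noteq> y"
  hence "degree G x = 2" using nb2 assms by blast
  thus False using assms by simp
qed

lemma closed_comp:
  assumes "v \<in> T" "\<forall>x\<in>T. \<forall>u. {x,u} \<in> snd G \<longrightarrow> u \<in> T"
  shows "component G v \<subseteq> T"
proof
  fix u assume "u \<in> component G v"
  hence "(v,u) \<in> (adj G)\<^sup>*" by (simp add: component_def)
  thus "u \<in> T" using assms by (induction rule: rtrancl_induct) (auto simp: adj_def)
qed

lemma cycle_big:
  assumes "v \<in> T" "finite T"
    and closed: "\<forall>x\<in>T. \<forall>u. {x,u} \<in> snd G \<longrightarrow> u \<in> T"
    and d2: "\<forall>x\<in>T. degree G x = 2"
    and reach: "\<forall>x\<in>T. (v,x) \<in> (adj G)\<^sup>*"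
  shows "card T > k"
proof -
  have "component G v = T"
    using closed_comp[OF assms(1) closed] reach by (auto simp: component_def)
  moreover have "v \<in> fst G"
  proof -
    have "degree G v = 2" using d2 assms(1) by blast
    hence "{u\<in>fst G. {u,v} \<in> snd G} \<noteq> {}" unfolding degree_def by (metis card.empty zero_neq_numeral)
    then obtain u where "{u,v} \<in> snd G" by blast
    thus ?thesis using edge by blast
  qed
  ultimately have "cycle_component G T"
    using d2 by (auto simp: cycle_component_def components_def)
  thus ?thesis using cyc by blast
qed

lemma path_big:
  assumes "v \<in> fst G" "degree G v \<noteq> 2" "v \<in> T" "finite T"
    and closed: "\<forall>x\<in>T. \<forall>u. {x,u} \<in> snd G \<longrightarrow> u \<in> T"
  shows "card T \<ge> k - 1"
proof -
  have sub: "component G v \<subseteq> T" using closed_comp assms by blast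
  have "v \<in> component G v" by (simp add: component_def)
  hence "path_component G (component G v)"
    using assms by (auto simp: path_component_def components_def)
  hence "card (component G v) \<ge> k - 1" using pth by blast
  thus ?thesis using card_mono[OF assms(4) sub] by simp
qed

end

lemma ipath_rev:
  assumes "ipath G s" shows "ipath G (rev s)"
proof -
  let ?n = "length s"
  have "\<forall>i<?n. \<forall>j<?n. ({rev s!i, rev s!j} \<in> snd G \<longleftrightarrow> (j = Suc i \<or> i = Suc j))"
  proof (intro allI impI)
    fix i j assume ij: "i < ?n" "j < ?n"
    have "{rev s!i, rev s!j} = {s!(?n - Suc i), s!(?n - Suc j)}" using ij by (simp add: rev_nth)
    moreover have "?n - Suc i < ?n" "?n - Suc j < ?n" using ij by auto
    ultimately have "{rev s!i, rev s!j} \<in> snd G \<longleftrightarrow> (?n - Suc j = Suc (?n - Suc i) \<or> ?n - Suc i = Suc (?n - Suc j))"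
      using assms unfolding ipath_def by simp
    also have "\<dots> \<longleftrightarrow> (j = Suc i \<or> i = Suc j)" using ij by arith
    finally show "{rev s!i, rev s!j} \<in> snd G \<longleftrightarrow> (j = Suc i \<or> i = Suc j)" .
  qed
  thus ?thesis using assms by (simp add: ipath_def)
qed

lemma ipath_edge: "ipath G s \<Longrightarrow> Suc i < length s \<Longrightarrow> {s!i, s!Suc i} \<in> snd G"
  unfolding ipath_def by auto

lemma ipath_noedge: "ipath G s \<Longrightarrow> i < length s \<Longrightarrow> j < length s \<Longrightarrow> j \<noteq> Suc i \<Longrightarrow> i \<noteq> Suc j
   \<Longrightarrow> {s!i, s!j} \<notin> snd G"
  unfolding ipath_def by auto

lemma ipath_reach:
  assumes "ipath G s" "i < length s"
  shows "(s!0, s!i) \<in> (adjS G (set s))\<^sup>*"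
  using assms(2)
proof (induction i)
  case 0 then show ?case by simp
next
  case (Suc i)
  have "(s!i, s!Suc i) \<in> adjS G (set s)"
    using ipath_edge[OF assms(1)] Suc.prems by (auto simp: adjS_def)
  then show ?case using Suc by (meson Suc_lessD rtrancl.rtrancl_into_rtrancl)
qed

lemma ipath_conn:
  assumes "ipath G s" "s \<noteq> []"
  shows "conn G (set s)"
proof -
  have "\<forall>x\<in>set s. (s!0, x) \<in> (adjS G (set s))\<^sup>*"
    using ipath_reach[OF assms(1)] by (metis in_set_conv_nth)
  hence "\<forall>x\<in>set s. \<forall>y\<in>set s. (x,y) \<in> (adjS G (set s))\<^sup>*"
    using rtr_sym by (meson rtrancl_trans)
  thus ?thesis using assms by (auto simp: conn_def ipath_def)
qed

context mdg begin

lemma two_nbrs: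
  assumes "y \<in> T" "z \<in> T" "y \<noteq> z" "{y,x} \<in> snd G" "{z,x} \<in> snd G"
  shows "degree G x = 2 \<and> (\<forall>u. {x,u} \<in> snd G \<longrightarrow> u \<in> T)"
  using nb2[OF assms(3-5)] assms(1,2) by (metis insert_commute)

lemma ipath_ext:
  assumes ip: "ipath G s" and ne: "s \<noteq> []" and w: "w \<notin> set s" and e: "{last s, w} \<in> snd G"
    and len: "length s < k"
  shows "ipath G (s @ [w])"
proof -
  let ?n = "length s"
  define L where "L = ?n - 1"
  have Ln: "L < ?n" "Suc L = ?n" using ne by (auto simp: L_def)
  have lastL: "last s = s!L" using ne by (simp add: L_def last_conv_nth)
  have wV: "w \<in> fst G" using e edge by blast
  have sV: "set s \<subseteq> fst G" using ip by (simp add: ipath_def)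
  have ds: "distinct s" using ip by (simp add: ipath_def)
  have key: "i < L \<Longrightarrow> {s!i, w} \<notin> snd G" for i
  proof
    assume iL: "i < L" and ew: "{s!i, w} \<in> snd G"
    show False
    proof (cases "i = 0")
      case False
      then obtain i' where i': "i = Suc i'" by (cases i) auto
      have e1: "{s!i', s!i} \<in> snd G" using ipath_edge[OF ip, of i'] i' iL Ln by auto
      have e2: "{s!Suc i, s!i} \<in> snd G" using ipath_edge[OF ip, of i] iL Ln by (auto simp: insert_commute)
      have ne12: "s!i' \<noteq> s!Suc i" using ds iL Ln i' by (simp add: nth_eq_iff_index_eq)
      have "{w, s!i} \<in> snd G" using ew by (simp add: insert_commute)
      hence "w = s!i' \<or> w = s!Suc i" using nb2[OF ne12 e1 e2] by blast
      thus False using w iL Ln i' by auto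
    next
      case True
      let ?T = "insert w (set s)"
      have L1: "L \<ge> 1" using iL True by simp
      have nbrs: "\<forall>x\<in>?T. \<exists>y z. y \<in> ?T \<and> z \<in> ?T \<and> y \<noteq> z \<and> {y,x} \<in> snd G \<and> {z,x} \<in> snd G"
      proof
        fix x assume "x \<in> ?T"
        then consider "x = w" | j where "j < ?n" "x = s!j" by (auto simp: in_set_conv_nth)
        then show "\<exists>y z. y \<in> ?T \<and> z \<in> ?T \<and> y \<noteq> z \<and> {y,x} \<in> snd G \<and> {z,x} \<in> snd G"
        proof cases
          case 1
          have "s!L \<noteq> s!0" using nth_eq_iff_index_eq[OF ds, of L 0] L1 Ln ne by simp
          moreover have "{s!L, w} \<in> snd G" using e lastL by simp
          moreover have "{s!0, w} \<in> snd G" using ew True by simp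
          moreover have "s!L \<in> ?T" using Ln(1) by simp
          moreover have "s!0 \<in> ?T" using ne by simp
          ultimately show ?thesis using 1 by blast
        next
          case 2
          show ?thesis
          proof (cases "j = 0")
            case True
            have "{s!1, s!0} \<in> snd G" using ipath_edge[OF ip, of 0] L1 Ln by (simp add: insert_commute)
            moreover have "{w, s!0} \<in> snd G" using ew \<open>i = 0\<close> by (simp add: insert_commute)
            moreover have l1: "1 < length s" using L1 Ln by simp
            moreover have "s!1 \<in> set s" using l1 by simp
            moreover hence "s!1 \<noteq> w" using w by blast
            moreover have "s!1 \<in> ?T" "w \<in> ?T" using l1 by auto
            ultimately show ?thesis using 2 True by blast
          next
            case False
            then obtain j' where j': "j = Suc j'" by (cases j) auto
            have e1: "{s!j', s!j} \<in> snd G" using ipath_edge[OF ip, of j'] j' 2 by auto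
            show ?thesis
            proof (cases "j = L")
              case True
              have "{w, s!j} \<in> snd G" using e lastL True by (simp add: insert_commute)
              moreover have "s!j' \<in> set s" using j' 2 by simp
              moreover hence "s!j' \<noteq> w" using w by blast
              moreover have "s!j' \<in> ?T" "w \<in> ?T" using j' 2 by auto
              ultimately show ?thesis using e1 2 by blast
            next
              case False
              hence jL: "Suc j < ?n" using 2 Ln by arith
              have e2: "{s!Suc j, s!j} \<in> snd G" using ipath_edge[OF ip, of j] jL by (simp add: insert_commute)
              have "s!j' \<noteq> s!Suc j" using ds jL j' by (simp add: nth_eq_iff_index_eq)
              moreover have "s!j' \<in> ?T" "s!Suc j \<in> ?T" using j' jL by auto
              ultimately show ?thesis using e1 e2 2 by blast
            qed
          qed
        qed
      qed
      have props: "\<forall>x\<in>?T. degree G x = 2 \<and> (\<forall>u. {x,u} \<in> snd G \<longrightarrow> u \<in> ?T)"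
      proof
        fix x assume "x \<in> ?T"
        then obtain y z where "y \<in> ?T" "z \<in> ?T" "y \<noteq> z" "{y,x} \<in> snd G" "{z,x} \<in> snd G"
          using nbrs by blast
        thus "degree G x = 2 \<and> (\<forall>u. {x,u} \<in> snd G \<longrightarrow> u \<in> ?T)" by (rule two_nbrs)
      qed
      have reach: "\<forall>x\<in>?T. (s!0, x) \<in> (adj G)\<^sup>*"
      proof
        fix x assume "x \<in> ?T"
        then consider "x = w" | j where "j < ?n" "x = s!j" by (auto simp: in_set_conv_nth)
        then show "(s!0, x) \<in> (adj G)\<^sup>*"
        proof cases
          case 1
          have "(s!0, s!L) \<in> (adj G)\<^sup>*" using rtr_adj[OF ipath_reach[OF ip Ln(1)]] .
          moreover have "(s!L, w) \<in> adj G" using e lastL by (simp add: adj_def)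
          ultimately show ?thesis using 1 by (simp add: rtrancl.rtrancl_into_rtrancl)
        next
          case 2 thus ?thesis using rtr_adj[OF ipath_reach[OF ip]] by blast
        qed
      qed
      have "card ?T > k"
      proof (rule cycle_big[of "s!0" ?T])
        show "s!0 \<in> ?T" using ne by simp
      qed (use props reach in auto)
      moreover have "card ?T = Suc ?n" using w ds by (simp add: distinct_card)
      ultimately show False using len by simp
    qed
  qed
  have "\<forall>i<Suc ?n. \<forall>j<Suc ?n. ({(s@[w])!i, (s@[w])!j} \<in> snd G \<longleftrightarrow> (j = Suc i \<or> i = Suc j))"
  proof (intro allI impI)
    fix i j assume i: "i < Suc ?n" and j: "j < Suc ?n"
    show "{(s@[w])!i, (s@[w])!j} \<in> snd G \<longleftrightarrow> (j = Suc i \<or> i = Suc j)"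
    proof (cases "i < ?n")
      case ii: True
      show ?thesis
      proof (cases "j < ?n")
        case True thus ?thesis using ii ip by (simp add: nth_append ipath_def)
      next
        case False
        hence jn: "j = ?n" using j by simp
        have "{s!i, w} \<in> snd G \<longleftrightarrow> i = L"
          using key[of i] e lastL ii Ln by (metis less_SucE)
        thus ?thesis using jn ii Ln by (auto simp: nth_append)
      qed
    next
      case False
      hence iin: "i = ?n" using i by simp
      show ?thesis
      proof (cases "j < ?n")
        case True
        have "{w, s!j} \<in> snd G \<longleftrightarrow> j = L"
          using key[of j] e lastL True Ln by (metis less_SucE insert_commute)
        thus ?thesis using iin True Ln by (auto simp: nth_append)
      next
        case False
        hence "j = ?n" using j by simp
        thus ?thesis using iin noloop by (simp add: nth_append)
      qed
    qed
  qed
  thus ?thesis using ip w wV by (simp add: ipath_def)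
qed

end

lemma ipath_single: "x \<in> fst G \<Longrightarrow> simple_graph G \<Longrightarrow> ipath G [x]"
  unfolding ipath_def simple_graph_def by (auto simp: doubleton_eq_iff)

context mdg begin

lemma ipath_single': "x \<in> fst G \<Longrightarrow> ipath G [x]"
  by (rule ipath_single[OF _ sg])

lemma ipath_len: "ipath G s \<Longrightarrow> length s = card (set s)"
  by (simp add: ipath_def distinct_card)

lemma interior_nbr:
  assumes ip: "ipath G s" and i: "0 < i" "Suc i < length s" and e: "{w, s!i} \<in> snd G"
  shows "w = s!(i - 1) \<or> w = s!Suc i"
proof -
  have ds: "distinct s" using ip by (simp add: ipath_def)
  obtain i' where i': "i = Suc i'" using i by (cases i) auto
  have e1: "{s!i', s!i} \<in> snd G" using ipath_edge[OF ip, of i'] i' i by auto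
  have e2: "{s!Suc i, s!i} \<in> snd G" using ipath_edge[OF ip, of i] i by (auto simp: insert_commute)
  have "s!i' \<noteq> s!Suc i" using nth_eq_iff_index_eq[OF ds, of i' "Suc i"] i i' by simp
  hence "w = s!i' \<or> w = s!Suc i" using nb2 e1 e2 e by blast
  thus ?thesis using i' by simp
qed

lemma conn_ipath:
  assumes c: "conn G X" and ck: "card X \<le> k"
  shows "\<exists>s. ipath G s \<and> set s = X"
proof -
  have XV: "X \<subseteq> fst G" and Xne: "X \<noteq> {}" using c by (auto simp: conn_def)
  have finX: "finite X" using XV finV finite_subset by blast
  define A where "A = {s. ipath G s \<and> set s \<subseteq> X}"
  have "A \<subseteq> {s. set s \<subseteq> X \<and> length s \<le> card X}"
    unfolding A_def using ipath_len card_mono[OF finX] by fastforce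
  hence finA: "finite A" using finite_lists_length_le[OF finX] finite_subset by blast
  obtain x0 where "x0 \<in> X" using Xne by blast
  hence "[x0] \<in> A" using XV ipath_single' by (auto simp: A_def)
  hence neA: "A \<noteq> {}" by blast
  define m where "m = Max (length ` A)"
  have "m \<in> length ` A" unfolding m_def using finA neA by simp
  then obtain s where sA: "s \<in> A" and sm: "length s = m" by blast
  have maxs: "\<And>t. t \<in> A \<Longrightarrow> length t \<le> length s" unfolding sm m_def using finA by simp
  have ip: "ipath G s" and sX: "set s \<subseteq> X" using sA by (auto simp: A_def)
  have ne: "s \<noteq> []" using maxs[OF \<open>[x0] \<in> A\<close>] by auto
  show ?thesis
  proof (rule ccontr)
    assume "\<not> ?thesis"
    hence "set s \<noteq> X" using ip by blast
    then obtain z where zX: "z \<in> X" "z \<notin> set s" using sX by blast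
    have s0X: "s!0 \<in> X" using sX ne by auto
    have "(s!0, z) \<in> (adjS G X)\<^sup>*" using c s0X zX by (auto simp: conn_def)
    then obtain y w where yw: "(y,w) \<in> adjS G X" "y \<in> set s" "w \<notin> set s"
      using rtr_exit[of "s!0" z "adjS G X" "set s"] zX ne by auto
    have wX: "w \<in> X" and eyw: "{y,w} \<in> snd G" using yw by (auto simp: adjS_def)
    have lt: "length s < k"
    proof -
      have "card (set s) < card X" using psubset_card_mono[OF finX] sX zX by blast
      thus ?thesis using ipath_len[OF ip] ck by simp
    qed
    obtain i where i: "i < length s" "y = s!i" using yw by (auto simp: in_set_conv_nth)
    have ext_contra: "\<And>t. ipath G t \<Longrightarrow> set t = set s \<Longrightarrow> last t = y \<Longrightarrow> False"
    proof -
      fix t assume t: "ipath G t" "set t = set s" "last t = y"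
      have tne: "t \<noteq> []" using t ne by auto
      have lt': "length t < k" using lt ipath_len t ip by simp
      have "ipath G (t @ [w])" using ipath_ext[OF t(1) tne] yw t eyw lt' by simp
      hence "t @ [w] \<in> A" using t sX wX by (auto simp: A_def)
      hence "length (t @ [w]) \<le> length s" using maxs by blast
      thus False using ipath_len t ip by simp
    qed
    show False
    proof (cases "i = 0")
      case True
      have "last (rev s) = y" using True i ne by (simp add: last_rev hd_conv_nth)
      thus False using ext_contra[OF ipath_rev[OF ip]] by simp
    next
      case False
      show False
      proof (cases "Suc i = length s")
        case True
        have "length s - 1 = i" using True by simp
        hence "last s = y" using i ne by (simp add: last_conv_nth)
        thus False using ext_contra[OF ip] by simp
      next
        case False
        hence "Suc i < length s" using i by simp
        hence "w = s!(i - 1) \<or> w = s!Suc i"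
          using interior_nbr[OF ip] \<open>i \<noteq> 0\<close> eyw i by (simp add: insert_commute)
        thus False using yw \<open>Suc i < length s\<close> i by auto
      qed
    qed
  qed
qed

end

lemma ipath_adjI: "ipath G s \<Longrightarrow> i < length s \<Longrightarrow> j < length s \<Longrightarrow> {s!i, s!j} \<in> snd G \<Longrightarrow> j = Suc i \<or> i = Suc j"
  unfolding ipath_def by blast

context mdg begin

lemma ipath_det:
  assumes s: "ipath G s" and t: "ipath G t" and len: "length s = length t"
    and h0: "0 < length s \<Longrightarrow> s!0 = t!0" and h1: "1 < length s \<Longrightarrow> s!1 = t!1"
  shows "s = t"
proof -
  have dt: "distinct t" using t by (simp add: ipath_def)
  have "\<forall>i. i < length s \<longrightarrow> t!i = s!i"
  proof (intro allI)
    fix i show "i < length s \<longrightarrow> t!i = s!i"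
    proof (induction i rule: less_induct)
      case (less i)
      show ?case
      proof
        assume il: "i < length s"
        show "t!i = s!i"
        proof (cases i)
          case 0 thus ?thesis using h0 il by simp
        next
          case (Suc j)
          show ?thesis
          proof (cases j)
            case 0 thus ?thesis using h1 il Suc by simp
          next
            case (Suc j')
            have tj: "t!j = s!j" using less \<open>i = Suc j\<close> il by simp
            have tj': "t!j' = s!j'" using less \<open>i = Suc j\<close> Suc il by simp
            have "{t!j, t!i} \<in> snd G" using ipath_edge[OF t, of j] il len \<open>i = Suc j\<close> by simp
            hence "{t!i, s!j} \<in> snd G" using tj by (simp add: insert_commute)
            hence "t!i = s!(j - 1) \<or> t!i = s!Suc j"
              using interior_nbr[OF s, of j "t!i"] Suc \<open>i = Suc j\<close> il by simp
            moreover have "t!i \<noteq> t!j'"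
              using nth_eq_iff_index_eq[OF dt, of i j'] il len \<open>i = Suc j\<close> Suc by simp
            ultimately show ?thesis using tj' Suc \<open>i = Suc j\<close> by simp
          qed
        qed
      qed
    qed
  qed
  thus ?thesis using len by (simp add: nth_equalityI)
qed

lemma ipath_uniq:
  assumes s: "ipath G s" and t: "ipath G t" and st: "set s = set t" and ne: "s \<noteq> []"
  shows "t = s \<or> t = rev s"
proof -
  have ds: "distinct s" and dt: "distinct t" using s t by (auto simp: ipath_def)
  have len: "length s = length t" using ipath_len[OF s] ipath_len[OF t] st by simp
  let ?n = "length s"
  have n0: "0 < ?n" using ne by simp
  show ?thesis
  proof (cases "?n = 1")
    case True
    then obtain a where "s = [a]" by (cases s) auto
    moreover then obtain b where "t = [b]" using len by (cases t) auto
    ultimately show ?thesis using st by simp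
  next
    case False
    hence n2: "1 < ?n" using n0 by linarith
    have "t!0 \<in> set s" using st n0 len by simp
    then obtain j where j: "j < ?n" "t!0 = s!j" by (auto simp: in_set_conv_nth)
    have t01: "{t!0, t!1} \<in> snd G" using ipath_edge[OF t, of 0] n2 len by simp
    have t1s: "t!1 \<in> set s" using st n2 len by simp
    then obtain i' where i': "i' < ?n" "t!1 = s!i'" by (auto simp: in_set_conv_nth)
    have adj_sj: "i' = Suc j \<or> j = Suc i'" using ipath_adjI[OF s j(1) i'(1)] t01 j i' by simp
    have only1: "\<And>x. x \<in> set s \<Longrightarrow> {t!0, x} \<in> snd G \<Longrightarrow> x = t!1"
    proof -
      fix x assume "x \<in> set s" "{t!0, x} \<in> snd G"
      then obtain l where l: "l < ?n" "x = t!l" using st len by (auto simp: in_set_conv_nth)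
      hence "l = Suc 0 \<or> 0 = Suc l" using ipath_adjI[OF t, of 0 l] \<open>{t!0,x} \<in> snd G\<close> len n0 by simp
      thus "x = t!1" using l by simp
    qed
    show ?thesis
    proof (cases "j = 0")
      case True
      hence "i' = 1" using adj_sj by simp
      hence "s = t" using ipath_det[OF s t len] True j i' by simp
      thus ?thesis by simp
    next
      case False
      show ?thesis
      proof (cases "Suc j = ?n")
        case True
        have "i' = j - 1" using adj_sj True j i'(1) by auto
        let ?r = "rev s"
        have nj: "length s - Suc 0 = j" using True by linarith
        have r0: "?r!0 = t!0" using nj j rev_nth[of 0 s] n0 by simp
        have nj2: "length s - Suc 1 = j - 1" using True by linarith
        have r1: "?r!1 = t!1" using nj2 i' \<open>i' = j - 1\<close> n2 rev_nth[of 1 s] by simp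
        have "?r = t" using ipath_det[OF ipath_rev[OF s] t] len r0 r1 by simp
        thus ?thesis by simp
      next
        case False
        hence jn: "Suc j < ?n" using j by simp
        obtain j' where j': "j = Suc j'" using \<open>j \<noteq> 0\<close> by (cases j) auto
        have "{t!0, s!j'} \<in> snd G" using ipath_edge[OF s, of j'] j' j by (simp add: insert_commute)
        hence a: "s!j' = t!1" using only1 j' j by simp
        have "{t!0, s!Suc j} \<in> snd G" using ipath_edge[OF s, of j] jn j by simp
        hence b: "s!Suc j = t!1" using only1 jn by simp
        have "s!j' \<noteq> s!Suc j" using nth_eq_iff_index_eq[OF ds, of j' "Suc j"] jn j' by simp
        thus ?thesis using a b by simp
      qed
    qed
  qed
qed

end

definition pstd :: "nat \<Rightarrow> nat graph" where
  "pstd b = ({0..<b}, {{i, Suc i} | i. Suc i < b})"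

definition isoOn :: "'a graph \<Rightarrow> 'a set \<Rightarrow> 'b graph \<Rightarrow> 'b set \<Rightarrow> ('a \<Rightarrow> 'b) \<Rightarrow> bool" where
  "isoOn G U H W f \<longleftrightarrow> bij_betw f U W \<and> (\<forall>u\<in>U. \<forall>v\<in>U. {u,v} \<in> snd G \<longleftrightarrow> {f u, f v} \<in> snd H)"

lemma pstd_edge: "u < b \<Longrightarrow> v < b \<Longrightarrow> {u,v} \<in> snd (pstd b) \<longleftrightarrow> (v = Suc u \<or> u = Suc v)"
  unfolding pstd_def by (auto simp: doubleton_eq_iff)

lemma ipath_iso: "ipath G s \<Longrightarrow> isoOn (pstd (length s)) {0..<length s} G (set s) (nth s)"
  unfolding isoOn_def
proof
  assume ip: "ipath G s"
  show "bij_betw ((!) s) {0..<length s} (set s)"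
    using ip by (intro bij_betw_nth) (auto simp: ipath_def)
  show "\<forall>u\<in>{0..<length s}. \<forall>v\<in>{0..<length s}. ({u, v} \<in> snd (pstd (length s))) = ({s ! u, s ! v} \<in> snd G)"
    using ip by (auto simp: pstd_edge ipath_def)
qed

lemma isoOn_inv:
  assumes "isoOn G U H W f" shows "isoOn H W G U (the_inv_into U f)"
proof -
  have b: "bij_betw f U W" using assms by (simp add: isoOn_def)
  have bi: "bij_betw (the_inv_into U f) W U" using bij_betw_the_inv_into[OF b] .
  have "\<forall>u\<in>W. \<forall>v\<in>W. {u,v} \<in> snd H \<longleftrightarrow> {the_inv_into U f u, the_inv_into U f v} \<in> snd G"
  proof (intro ballI)
    fix u v assume uv: "u \<in> W" "v \<in> W"
    have fu: "f (the_inv_into U f u) = u" "f (the_inv_into U f v) = v"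
      using uv b by (auto simp: bij_betw_def f_the_inv_into_f)
    have "the_inv_into U f u \<in> U" "the_inv_into U f v \<in> U" using bi uv by (auto simp: bij_betw_def)
    thus "{u,v} \<in> snd H \<longleftrightarrow> {the_inv_into U f u, the_inv_into U f v} \<in> snd G"
      using assms fu unfolding isoOn_def by metis
  qed
  thus ?thesis using bi by (simp add: isoOn_def)
qed

lemma isoOn_comp:
  assumes "isoOn G U H W f" "isoOn H W K Z g" shows "isoOn G U K Z (g \<circ> f)"
proof -
  have "bij_betw (g \<circ> f) U Z" using assms bij_betw_trans by (auto simp: isoOn_def)
  moreover have "\<forall>u\<in>U. f u \<in> W" using assms by (auto simp: isoOn_def bij_betw_def)
  ultimately show ?thesis using assms unfolding isoOn_def by auto
qed

lemma isoOn_union: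
  assumes f: "isoOn G U1 H W1 f" and g: "isoOn G U2 H W2 g"
    and s1: "sep G U1 U2" and s2: "sep H W1 W2"
  shows "isoOn G (U1 \<union> U2) H (W1 \<union> W2) (\<lambda>x. if x \<in> U1 then f x else g x)"
proof -
  have bf: "bij_betw f U1 W1" and bg: "bij_betw g U2 W2" using f g by (auto simp: isoOn_def)
  have d1: "U1 \<inter> U2 = {}" and d2: "W1 \<inter> W2 = {}" using s1 s2 by (auto simp: sep_def)
  have "bij_betw (\<lambda>x. if x \<in> U1 then f x else g x) (U1 \<union> U2) (W1 \<union> W2)"
  proof (rule bij_betw_combine[OF _ _ d2])
    show "bij_betw (\<lambda>x. if x \<in> U1 then f x else g x) U1 W1"
      using bf bij_betw_cong[of U1 "\<lambda>x. if x \<in> U1 then f x else g x" f W1] by simp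
    show "bij_betw (\<lambda>x. if x \<in> U1 then f x else g x) U2 W2"
    proof -
      have "\<forall>a\<in>U2. a \<notin> U1" using d1 by blast
      thus ?thesis using bg bij_betw_cong[of U2 "\<lambda>x. if x \<in> U1 then f x else g x" g W2] by simp
    qed
  qed
  moreover have "\<forall>u\<in>U1 \<union> U2. \<forall>v\<in>U1 \<union> U2. {u,v} \<in> snd G \<longleftrightarrow>
      {(if u \<in> U1 then f u else g u), (if v \<in> U1 then f v else g v)} \<in> snd H"
  proof (intro ballI)
    fix u v assume u: "u \<in> U1 \<union> U2" and v: "v \<in> U1 \<union> U2"
    have fW: "\<And>x. x \<in> U1 \<Longrightarrow> f x \<in> W1" using bf by (auto simp: bij_betw_def)
    have gW: "\<And>x. x \<in> U2 \<Longrightarrow> g x \<in> W2" using bg by (auto simp: bij_betw_def)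
    show "{u,v} \<in> snd G \<longleftrightarrow> {(if u \<in> U1 then f u else g u), (if v \<in> U1 then f v else g v)} \<in> snd H"
    proof (cases "u \<in> U1")
      case True
      show ?thesis
      proof (cases "v \<in> U1")
        case True thus ?thesis using \<open>u \<in> U1\<close> f by (simp add: isoOn_def)
      next
        case False
        hence "v \<in> U2" using v by simp
        thus ?thesis using \<open>u \<in> U1\<close> False s1 s2 fW gW unfolding sep_def by auto
      qed
    next
      case False
      hence uU2: "u \<in> U2" using u by simp
      show ?thesis
      proof (cases "v \<in> U1")
        case True thus ?thesis using uU2 False s1 s2 fW gW unfolding sep_def by (auto simp: insert_commute)
      next
        case False
        hence "v \<in> U2" using v by simp
        thus ?thesis using uU2 \<open>u \<notin> U1\<close> False g by (simp add: isoOn_def)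
      qed
    qed
  qed
  ultimately show ?thesis by (simp add: isoOn_def)
qed

lemma isoOn_graph_iso:
  assumes "isoOn G S H S' f" shows "graph_iso (induced G S) (induced H S')"
proof -
  have "\<forall>u\<in>S. f u \<in> S'" using assms by (auto simp: isoOn_def bij_betw_def)
  thus ?thesis using assms unfolding graph_iso_def induced_def isoOn_def by (auto intro!: exI[of _ f])
qed

lemma graph_iso_isoOn: "graph_iso A B \<longleftrightarrow> (\<exists>f. isoOn A (fst A) B (fst B) f)"
  by (simp add: graph_iso_def isoOn_def)

lemma graph_iso_trans:
  assumes "graph_iso A B" "graph_iso C B" shows "graph_iso A C"
  using assms isoOn_comp isoOn_inv unfolding graph_iso_isoOn by metis


definition fam :: "'a graph \<Rightarrow> 'a set set \<Rightarrow> bool" where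
  "fam G P \<longleftrightarrow> finite P \<and> (\<forall>Y\<in>P. conn G Y) \<and> (\<forall>Y\<in>P. \<forall>Z\<in>P. Y \<noteq> Z \<longrightarrow> sep G Y Z)"
definition prof :: "'a set set \<Rightarrow> nat multiset" where
  "prof P = image_mset card (mset_set P)"
definition famset :: "'a graph \<Rightarrow> nat multiset \<Rightarrow> 'a set set set" where
  "famset G M = {P. fam G P \<and> prof P = M}"
definition compS :: "'a graph \<Rightarrow> 'a set \<Rightarrow> 'a \<Rightarrow> 'a set" where
  "compS G S v = {u\<in>S. (v,u) \<in> (adjS G S)\<^sup>*}"
definition runs :: "'a graph \<Rightarrow> 'a set \<Rightarrow> 'a set set" where
  "runs G S = compS G S ` S"

lemma sep_sym: "sep G X Y \<Longrightarrow> sep G Y X"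
  unfolding sep_def by (metis Int_commute insert_commute)

lemma sep_mono: "sep G X Y \<Longrightarrow> X' \<subseteq> X \<Longrightarrow> Y' \<subseteq> Y \<Longrightarrow> sep G X' Y'"
  unfolding sep_def by blast

lemma sep_Union: "(\<And>Z. Z \<in> P \<Longrightarrow> sep G Y Z) \<Longrightarrow> sep G Y (\<Union>P)"
  by (auto simp: sep_def)

lemma conn_ne: "conn G X \<Longrightarrow> X \<noteq> {}" by (simp add: conn_def)

lemma sep_self: "conn G X \<Longrightarrow> \<not> sep G X X"
  by (auto simp: sep_def conn_def)

lemma fam_subset: "fam G P \<Longrightarrow> Q \<subseteq> P \<Longrightarrow> fam G Q"
  unfolding fam_def by (meson finite_subset subsetD)

lemma fam_insert:
  assumes "fam G P" "conn G Y" "\<And>Z. Z \<in> P \<Longrightarrow> sep G Y Z"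
  shows "fam G (insert Y P)"
  using assms sep_sym unfolding fam_def by blast

lemma prof_insert: "finite P \<Longrightarrow> Y \<notin> P \<Longrightarrow> prof (insert Y P) = add_mset (card Y) (prof P)"
  by (simp add: prof_def)

lemma prof_remove: "finite P \<Longrightarrow> Y \<in> P \<Longrightarrow> prof P = add_mset (card Y) (prof (P - {Y}))"
  by (metis Diff_iff finite_Diff insert_Diff prof_insert singletonI)

lemma compS_reach:
  assumes "(v,x) \<in> (adjS G S)\<^sup>*"
  shows "(v,x) \<in> (adjS G (compS G S v))\<^sup>*"
  using assms
proof (induction rule: rtrancl_induct)
  case base then show ?case by simp
next
  case (step y z)
  have "y \<in> S" "z \<in> S" "{y,z} \<in> snd G" using step(2) by (auto simp: adjS_def)
  hence "(y,z) \<in> adjS G (compS G S v)"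
    using step(1,2) by (auto simp: adjS_def compS_def intro: rtrancl_into_rtrancl)
  with step(3) show ?case by (rule rtrancl_into_rtrancl)
qed

lemma compS_eq:
  assumes "u \<in> compS G S v" shows "compS G S u = compS G S v"
proof -
  have vu: "(v,u) \<in> (adjS G S)\<^sup>*" using assms by (simp add: compS_def)
  have uv: "(u,v) \<in> (adjS G S)\<^sup>*" using rtr_sym[OF vu] .
  show ?thesis unfolding compS_def using vu uv by (meson rtrancl_trans)
qed

lemma compS_self: "v \<in> S \<Longrightarrow> v \<in> compS G S v"
  by (simp add: compS_def)

lemma runs_fam:
  assumes "S \<subseteq> fst G" "finite S"
  shows "fam G (runs G S) \<and> \<Union>(runs G S) = S"
proof -
  have conn: "conn G (compS G S v)" if "v \<in> S" for v
  proof -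
    have "\<forall>x\<in>compS G S v. \<forall>y\<in>compS G S v. (x,y) \<in> (adjS G (compS G S v))\<^sup>*"
    proof (intro ballI)
      fix x y assume "x \<in> compS G S v" "y \<in> compS G S v"
      hence "(v,x) \<in> (adjS G (compS G S v))\<^sup>*" "(v,y) \<in> (adjS G (compS G S v))\<^sup>*"
        using compS_reach[of v x G S] compS_reach[of v y G S] by (auto simp: compS_def)
      thus "(x,y) \<in> (adjS G (compS G S v))\<^sup>*" using rtr_sym by (meson rtrancl_trans)
    qed
    moreover have "compS G S v \<subseteq> fst G" using assms by (auto simp: compS_def)
    moreover have "v \<in> compS G S v" using that by (rule compS_self)
    ultimately show ?thesis by (auto simp: conn_def)
  qed
  have sep: "sep G (compS G S v) (compS G S w)" if "v \<in> S" "w \<in> S" "compS G S v \<noteq> compS G S w" for v w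
  proof -
    have "compS G S v \<inter> compS G S w = {}"
      using that compS_eq by (metis disjoint_iff)
    moreover have "\<forall>x\<in>compS G S v. \<forall>y\<in>compS G S w. {x,y} \<notin> snd G"
    proof (intro ballI notI)
      fix x y assume xy: "x \<in> compS G S v" "y \<in> compS G S w" "{x,y} \<in> snd G"
      hence "(x,y) \<in> adjS G S" by (auto simp: adjS_def compS_def)
      hence "y \<in> compS G S x" using xy by (auto simp: compS_def)
      hence "compS G S y = compS G S v" using compS_eq xy(1) by metis
      thus False using compS_eq xy(2) that(3) by metis
    qed
    ultimately show ?thesis by (simp add: sep_def)
  qed
  have "fam G (runs G S)" unfolding fam_def runs_def using assms conn sep by blast
  moreover have "\<Union>(runs G S) = S" unfolding runs_def using compS_self by (auto simp: compS_def)
  ultimately show ?thesis by simp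
qed

lemma fam_runs:
  assumes "fam G P" shows "runs G (\<Union>P) = P"
proof -
  have key: "compS G (\<Union>P) y = Y" if "Y \<in> P" "y \<in> Y" for Y y
  proof
    show "compS G (\<Union>P) y \<subseteq> Y"
    proof
      fix x assume "x \<in> compS G (\<Union>P) y"
      hence "(y,x) \<in> (adjS G (\<Union>P))\<^sup>*" by (simp add: compS_def)
      thus "x \<in> Y"
      proof (induction rule: rtrancl_induct)
        case base show ?case using that by simp
      next
        case (step z x)
        then obtain Z where "Z \<in> P" "x \<in> Z" "{z,x} \<in> snd G" by (auto simp: adjS_def)
        thus ?case using step(3) assms that(1) unfolding fam_def sep_def by blast
      qed
    qed
    show "Y \<subseteq> compS G (\<Union>P) y"
    proof
      fix x assume "x \<in> Y"
      hence "(y,x) \<in> (adjS G Y)\<^sup>*" using assms that by (auto simp: fam_def conn_def)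
      hence "(y,x) \<in> (adjS G (\<Union>P))\<^sup>*" using rtr_mono[of Y "\<Union>P"] that by blast
      thus "x \<in> compS G (\<Union>P) y" using \<open>x \<in> Y\<close> that by (auto simp: compS_def)
    qed
  qed
  show ?thesis
  proof
    show "runs G (\<Union>P) \<subseteq> P" unfolding runs_def using key by auto
    show "P \<subseteq> runs G (\<Union>P)"
    proof
      fix Y assume Y: "Y \<in> P"
      have "Y \<noteq> {}" using assms Y by (auto simp: fam_def conn_def)
      then obtain y where "y \<in> Y" by blast
      thus "Y \<in> runs G (\<Union>P)" unfolding runs_def using key Y by blast
    qed
  qed
qed

lemma sum_prof: "fam G P \<Longrightarrow> finite (fst G) \<Longrightarrow> sum_mset (prof P) = card (\<Union>P)"
proof -
  assume f: "fam G P" and fv: "finite (fst G)"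
  have fin: "finite P" using f by (simp add: fam_def)
  have "sum_mset (prof P) = sum card P" by (simp add: prof_def sum_unfold_sum_mset)
  also have "\<dots> = card (\<Union>P)"
  proof (rule card_Union_disjoint[symmetric])
    show "pairwise disjnt P" using f by (auto simp: fam_def pairwise_def disjnt_def sep_def)
    fix A assume "A \<in> P" thus "finite A" using f fv
      by (meson conn_def fam_def finite_subset)
  qed
  finally show ?thesis .
qed


lemma graph_iso_comp: "graph_iso A B \<Longrightarrow> graph_iso B C \<Longrightarrow> graph_iso A C"
  unfolding graph_iso_isoOn using isoOn_comp by metis

lemma isoOn_empty: "isoOn G {} H {} f"
  by (simp add: isoOn_def bij_betw_def)

lemma fam_iso:
  assumes m1: "mdg G k" and m2: "mdg G' k"
  shows "finite P \<Longrightarrow> fam G P \<Longrightarrow> fam G' P' \<Longrightarrow> prof P = prof P' \<Longrightarrow> \<forall>Y\<in>P. card Y \<le> k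
    \<Longrightarrow> \<forall>Y\<in>P'. card Y \<le> k \<Longrightarrow> \<exists>f. isoOn G (\<Union>P) G' (\<Union>P') f"
proof (induction P arbitrary: P' rule: finite_induct)
  case empty
  have "finite P'" using empty by (simp add: fam_def)
  hence "P' = {}" using empty by (simp add: prof_def mset_set_empty_iff)
  thus ?case by (intro exI[of _ undefined]) (simp add: isoOn_def bij_betw_def)
next
  case (insert Y P)
  have finP': "finite P'" using insert by (simp add: fam_def)
  have "prof P' = add_mset (card Y) (prof P)" using insert prof_insert by metis
  hence "card Y \<in># image_mset card (mset_set P')" by (simp add: prof_def)
  then obtain Y' where Y': "Y' \<in> P'" "card Y' = card Y" using finP' by auto
  define P'' where "P'' = P' - {Y'}"
  have "prof P' = add_mset (card Y') (prof P'')" unfolding P''_def using prof_remove finP' Y' by metis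
  hence pp: "prof P = prof P''" using \<open>prof P' = add_mset (card Y) (prof P)\<close> Y' by simp
  have fP: "fam G P" using insert fam_subset by blast
  have fP'': "fam G' P''" using insert fam_subset unfolding P''_def by blast
  obtain f where f: "isoOn G (\<Union>P) G' (\<Union>P'') f"
    using insert.IH[OF fP fP'' pp] insert.prems unfolding P''_def by auto
  have cY: "conn G Y" and cY': "conn G' Y'" using insert.prems Y' by (auto simp: fam_def)
  obtain s where s: "ipath G s" "set s = Y"
    using mdg.conn_ipath[OF m1 cY] insert.prems by auto
  obtain s' where s': "ipath G' s'" "set s' = Y'"
    using mdg.conn_ipath[OF m2 cY'] insert.prems Y' by auto
  have ls: "length s = length s'"
    using mdg.ipath_len[OF m1 s(1)] mdg.ipath_len[OF m2 s'(1)] s s' Y' by simp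
  have i2: "isoOn (pstd (length s)) {0..<length s} G' (set s') ((!) s')" using ipath_iso[OF s'(1)] ls by simp
  obtain g where g: "isoOn G Y G' Y' g"
    using isoOn_comp[OF isoOn_inv[OF ipath_iso[OF s(1)]] i2] s s' by blast
  have sep1: "sep G Y (\<Union>P)"
    using insert.prems insert.hyps by (intro sep_Union) (auto simp: fam_def)
  have sep2: "sep G' Y' (\<Union>P'')"
    using insert.prems Y' by (intro sep_Union) (auto simp: fam_def P''_def)
  have "\<Union>P' = Y' \<union> \<Union>P''" using Y' unfolding P''_def by blast
  thus ?case using isoOn_union[OF g f sep1 sep2] by auto
qed

context mdg begin

lemma runs_card:
  assumes "S \<subseteq> fst G" "card S = k"
  shows "\<forall>Y\<in>runs G S. card Y \<le> k"
proof -
  have "finite S" using assms finV finite_subset by blast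
  hence "\<Union>(runs G S) = S" using runs_fam assms by blast
  thus ?thesis using assms card_mono[OF \<open>finite S\<close>] by (metis Union_upper)
qed

lemma count_famset:
  assumes "sum_mset M = k"
  shows "card {S. S \<subseteq> fst G \<and> card S = k \<and> prof (runs G S) = M} = card (famset G M)"
proof -
  have "bij_betw (runs G) {S. S \<subseteq> fst G \<and> card S = k \<and> prof (runs G S) = M} (famset G M)"
  proof (rule bij_betw_byWitness[where f' = Union])
    show "\<forall>S\<in>{S. S \<subseteq> fst G \<and> card S = k \<and> prof (runs G S) = M}. \<Union>(runs G S) = S"
    proof
      fix S assume "S \<in> {S. S \<subseteq> fst G \<and> card S = k \<and> prof (runs G S) = M}"
      hence S: "S \<subseteq> fst G" by simp
      hence "finite S" using finV finite_subset by blast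
      thus "\<Union>(runs G S) = S" using runs_fam[OF S] by simp
    qed
    show "\<forall>P\<in>famset G M. runs G (\<Union>P) = P" by (simp add: famset_def fam_runs)
    show "runs G ` {S. S \<subseteq> fst G \<and> card S = k \<and> prof (runs G S) = M} \<subseteq> famset G M"
    proof
      fix P assume "P \<in> runs G ` {S. S \<subseteq> fst G \<and> card S = k \<and> prof (runs G S) = M}"
      then obtain S where S: "S \<subseteq> fst G" "prof (runs G S) = M" "P = runs G S" by blast
      hence "finite S" using finV finite_subset by blast
      thus "P \<in> famset G M" using runs_fam[OF S(1)] S by (simp add: famset_def)
    qed
    show "\<Union> ` famset G M \<subseteq> {S. S \<subseteq> fst G \<and> card S = k \<and> prof (runs G S) = M}"
    proof
      fix S assume "S \<in> \<Union> ` famset G M"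
      then obtain P where P: "fam G P" "prof P = M" "S = \<Union>P" by (auto simp: famset_def)
      have "S \<subseteq> fst G" using P by (auto simp: fam_def conn_def)
      moreover have "card S = k" using sum_prof[OF P(1) finV] P assms by simp
      moreover have "runs G S = P" using fam_runs P by simp
      ultimately show "S \<in> {S. S \<subseteq> fst G \<and> card S = k \<and> prof (runs G S) = M}" using P by simp
    qed
  qed
  thus ?thesis by (rule bij_betw_same_card)
qed

lemma deck_sum:
  assumes good: "\<And>S. S \<subseteq> fst G \<Longrightarrow> card S = k \<Longrightarrow> (graph_iso (induced G S) H \<longleftrightarrow> prof (runs G S) \<in> Good)"
    and finProf: "finite Prof"
    and inProf: "\<And>S. S \<subseteq> fst G \<Longrightarrow> card S = k \<Longrightarrow> prof (runs G S) \<in> Prof"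
    and sumProf: "\<And>M. M \<in> Prof \<Longrightarrow> sum_mset M = k"
  shows "deck_count G k H = (\<Sum>M\<in>Good \<inter> Prof. card (famset G M))"
proof -
  let ?A = "\<lambda>M. {S. S \<subseteq> fst G \<and> card S = k \<and> prof (runs G S) = M}"
  have "{S. S \<subseteq> fst G \<and> card S = k \<and> graph_iso (induced G S) H} = (\<Union>M\<in>Good \<inter> Prof. ?A M)"
    using good inProf by auto
  hence "deck_count G k H = card (\<Union>M\<in>Good \<inter> Prof. ?A M)" by (simp add: deck_count_def)
  also have "\<dots> = (\<Sum>M\<in>Good \<inter> Prof. card (?A M))"
  proof (rule card_UN_disjoint)
    show "finite (Good \<inter> Prof)" using finProf by simp
    show "\<forall>i\<in>Good \<inter> Prof. finite (?A i)" using finV by auto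
    show "\<forall>i\<in>Good \<inter> Prof. \<forall>j\<in>Good \<inter> Prof. i \<noteq> j \<longrightarrow> ?A i \<inter> ?A j = {}" by auto
  qed
  also have "\<dots> = (\<Sum>M\<in>Good \<inter> Prof. card (famset G M))"
    using count_famset sumProf by (intro sum.cong) auto
  finally show ?thesis .
qed

lemma prof_sum: "S \<subseteq> fst G \<Longrightarrow> card S = k \<Longrightarrow> sum_mset (prof (runs G S)) = k"
proof -
  assume S: "S \<subseteq> fst G" "card S = k"
  have "finite S" using S finV finite_subset by blast
  hence "fam G (runs G S)" "\<Union>(runs G S) = S" using runs_fam[OF S(1)] by auto
  thus ?thesis using sum_prof[OF _ finV] S by metis
qed

end

lemma deck_from_famset:
  assumes m1: "mdg G k" and m2: "mdg G' k"
    and eq: "\<And>M. sum_mset M = k \<Longrightarrow> card (famset G M) = card (famset G' M)"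
  shows "same_deck k G G'"
  unfolding same_deck_def
proof
  fix H :: "nat graph"
  let ?K = "{S. S \<subseteq> fst G \<and> card S = k}"
  let ?K' = "{S. S \<subseteq> fst G' \<and> card S = k}"
  define Prof where "Prof = (\<lambda>S. prof (runs G S)) ` ?K \<union> (\<lambda>S. prof (runs G' S)) ` ?K'"
  define Good where "Good = {M. \<exists>T. T \<subseteq> fst G \<and> card T = k \<and> prof (runs G T) = M \<and> graph_iso (induced G T) H}
     \<union> {M. \<exists>T. T \<subseteq> fst G' \<and> card T = k \<and> prof (runs G' T) = M \<and> graph_iso (induced G' T) H}"
  have finK: "finite ?K" using mdg.finV[OF m1] by simp
  have finK': "finite ?K'" using mdg.finV[OF m2] by simp
  have finProf: "finite Prof" unfolding Prof_def using finK finK' by simp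
  have sumProf: "\<And>M. M \<in> Prof \<Longrightarrow> sum_mset M = k"
    unfolding Prof_def using mdg.prof_sum[OF m1] mdg.prof_sum[OF m2] by auto
  have isoGG: "graph_iso (induced A S) (induced B T)"
    if ma: "mdg A k" and mb: "mdg B k" and S: "S \<subseteq> fst A" "card S = k" and T: "T \<subseteq> fst B" "card T = k"
      and pr: "prof (runs A S) = prof (runs B T)" for A :: "'x graph" and B :: "'y graph" and S T
  proof -
    have finS: "finite S" using S mdg.finV[OF ma] finite_subset by blast
    have finT: "finite T" using T mdg.finV[OF mb] finite_subset by blast
    have fa: "fam A (runs A S)" "\<Union>(runs A S) = S" using runs_fam[OF S(1) finS] by auto
    have fb: "fam B (runs B T)" "\<Union>(runs B T) = T" using runs_fam[OF T(1) finT] by auto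
    have "finite (runs A S)" using fa by (simp add: fam_def)
    then obtain f where "isoOn A (\<Union>(runs A S)) B (\<Union>(runs B T)) f"
      using fam_iso[OF ma mb _ fa(1) fb(1) pr] mdg.runs_card[OF ma S] mdg.runs_card[OF mb T] by blast
    hence "isoOn A S B T f" using fa(2) fb(2) by simp
    thus ?thesis by (rule isoOn_graph_iso)
  qed
  have good1: "graph_iso (induced G S) H \<longleftrightarrow> prof (runs G S) \<in> Good" if "S \<subseteq> fst G" "card S = k" for S
  proof
    assume "graph_iso (induced G S) H" thus "prof (runs G S) \<in> Good" using that by (auto simp: Good_def)
  next
    assume "prof (runs G S) \<in> Good"
    then consider T where "T \<subseteq> fst G" "card T = k" "prof (runs G T) = prof (runs G S)" "graph_iso (induced G T) H"
      | T where "T \<subseteq> fst G'" "card T = k" "prof (runs G' T) = prof (runs G S)" "graph_iso (induced G' T) H"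
      unfolding Good_def by blast
    thus "graph_iso (induced G S) H"
    proof cases
      case 1
      have "graph_iso (induced G S) (induced G T)" using isoGG[OF m1 m1 that 1(1,2)] 1(3) by simp
      thus ?thesis using 1(4) by (rule graph_iso_comp)
    next
      case 2
      have "graph_iso (induced G S) (induced G' T)" using isoGG[OF m1 m2 that 2(1,2)] 2(3) by simp
      thus ?thesis using 2(4) by (rule graph_iso_comp)
    qed
  qed
  have good2: "graph_iso (induced G' S) H \<longleftrightarrow> prof (runs G' S) \<in> Good" if "S \<subseteq> fst G'" "card S = k" for S
  proof
    assume "graph_iso (induced G' S) H" thus "prof (runs G' S) \<in> Good" using that by (auto simp: Good_def)
  next
    assume "prof (runs G' S) \<in> Good"
    then consider T where "T \<subseteq> fst G" "card T = k" "prof (runs G T) = prof (runs G' S)" "graph_iso (induced G T) H"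
      | T where "T \<subseteq> fst G'" "card T = k" "prof (runs G' T) = prof (runs G' S)" "graph_iso (induced G' T) H"
      unfolding Good_def by blast
    thus "graph_iso (induced G' S) H"
    proof cases
      case 1
      have "graph_iso (induced G' S) (induced G T)" using isoGG[OF m2 m1 that 1(1,2)] 1(3) by simp
      thus ?thesis using 1(4) by (rule graph_iso_comp)
    next
      case 2
      have "graph_iso (induced G' S) (induced G' T)" using isoGG[OF m2 m2 that 2(1,2)] 2(3) by simp
      thus ?thesis using 2(4) by (rule graph_iso_comp)
    qed
  qed
  have "deck_count G k H = (\<Sum>M\<in>Good \<inter> Prof. card (famset G M))"
    using mdg.deck_sum[OF m1 good1 finProf _ sumProf] unfolding Prof_def by simp
  also have "\<dots> = (\<Sum>M\<in>Good \<inter> Prof. card (famset G' M))"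
    using eq sumProf by (intro sum.cong) auto
  also have "\<dots> = deck_count G' k H"
    using mdg.deck_sum[OF m2 good2 finProf _ sumProf] unfolding Prof_def by simp
  finally show "deck_count G k H = deck_count G' k H" .
qed


definition Iv :: "'a graph \<Rightarrow> nat \<Rightarrow> 'a set set" where
  "Iv G a = {X. conn G X \<and> card X = a}"

definition conf :: "'a graph \<Rightarrow> nat multiset \<Rightarrow> nat \<Rightarrow> 'a set \<Rightarrow> ('a set set \<times> 'a set) set" where
  "conf G MJ a U = {(J,X). fam G J \<and> prof J = MJ \<and> conn G X \<and> card X = a \<and> (\<forall>Y\<in>J. \<not> sep G X Y) \<and> X \<union> \<Union>J = U}"

definition cstd :: "nat multiset \<Rightarrow> nat \<Rightarrow> nat \<Rightarrow> nat" where
  "cstd MJ a b = card (conf (pstd b) MJ a {0..<b})"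

lemma isoOn_edge: "isoOn G U H W f \<Longrightarrow> u \<in> U \<Longrightarrow> v \<in> U \<Longrightarrow> {u,v} \<in> snd G \<longleftrightarrow> {f u, f v} \<in> snd H"
  by (simp add: isoOn_def)

lemma isoOn_inj: "isoOn G U H W f \<Longrightarrow> inj_on f U"
  by (simp add: isoOn_def bij_betw_def)

lemma isoOn_img: "isoOn G U H W f \<Longrightarrow> f ` U = W"
  by (simp add: isoOn_def bij_betw_def)

lemma conn_iso:
  assumes iso: "isoOn G U H W f" and WH: "W \<subseteq> fst H" and ZU: "Z \<subseteq> U" and c: "conn G Z"
  shows "conn H (f ` Z)"
proof -
  have reach: "(f x, f y) \<in> (adjS H (f ` Z))\<^sup>*" if "(x,y) \<in> (adjS G Z)\<^sup>*" for x y
    using that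
  proof (induction rule: rtrancl_induct)
    case base show ?case by simp
  next
    case (step y z)
    have yz: "y \<in> Z" "z \<in> Z" "{y,z} \<in> snd G" using step(2) by (auto simp: adjS_def)
    hence "{f y, f z} \<in> snd H" using isoOn_edge[OF iso] ZU by blast
    hence "(f y, f z) \<in> adjS H (f ` Z)" using yz by (auto simp: adjS_def)
    with step(3) show ?case by (rule rtrancl_into_rtrancl)
  qed
  have "f ` Z \<subseteq> fst H" using isoOn_img[OF iso] ZU WH by blast
  moreover have "f ` Z \<noteq> {}" using c by (simp add: conn_def)
  moreover have "\<forall>a\<in>f ` Z. \<forall>b\<in>f ` Z. (a,b) \<in> (adjS H (f ` Z))\<^sup>*"
    using c reach by (auto simp: conn_def)
  ultimately show ?thesis by (simp add: conn_def)
qed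

lemma sep_iso:
  assumes iso: "isoOn G U H W f" and "Y \<subseteq> U" "Z \<subseteq> U"
  shows "sep H (f ` Y) (f ` Z) \<longleftrightarrow> sep G Y Z"
proof -
  have inj: "inj_on f U" using isoOn_inj[OF iso] .
  have "f ` Y \<inter> f ` Z = {} \<longleftrightarrow> Y \<inter> Z = {}"
    by (simp add: inj_on_image_Int[OF inj assms(2,3), symmetric])
  moreover have "(\<forall>x\<in>f ` Y. \<forall>y\<in>f ` Z. {x,y} \<notin> snd H) \<longleftrightarrow> (\<forall>x\<in>Y. \<forall>y\<in>Z. {x,y} \<notin> snd G)"
  proof -
    have "\<And>x y. x \<in> Y \<Longrightarrow> y \<in> Z \<Longrightarrow> {f x, f y} \<in> snd H \<longleftrightarrow> {x,y} \<in> snd G"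
      using isoOn_edge[OF iso] assms(2,3) by (meson subsetD)
    thus ?thesis by auto
  qed
  ultimately show ?thesis by (simp add: sep_def)
qed

lemma conf_le:
  assumes iso: "isoOn G U H W f" and WH: "W \<subseteq> fst H" and finW: "finite W"
  shows "card (conf G MJ a U) \<le> card (conf H MJ a W)"
proof -
  let ?F = "\<lambda>(J,X). ((`) f ` J, f ` X)"
  have inj: "inj_on f U" using isoOn_inj[OF iso] .
  have sub: "conf G MJ a U \<subseteq> Pow (Pow U) \<times> Pow U" by (auto simp: conf_def)
  have injF: "inj_on ?F (conf G MJ a U)"
  proof (rule inj_on_subset[OF _ sub])
    have i1: "inj_on ((`) f) (Pow U)" using inj_on_image_Pow[OF inj] .
    have i2: "inj_on ((`) ((`) f)) (Pow (Pow U))" using inj_on_image_Pow[OF i1] .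
    show "inj_on ?F (Pow (Pow U) \<times> Pow U)"
      using i1 i2 unfolding inj_on_def by auto
  qed
  have img: "?F ` conf G MJ a U \<subseteq> conf H MJ a W"
  proof
    fix p assume "p \<in> ?F ` conf G MJ a U"
    then obtain J X where JX: "(J,X) \<in> conf G MJ a U" and p: "p = ((`) f ` J, f ` X)" by auto
    have fJ: "fam G J" and pJ: "prof J = MJ" and cX: "conn G X" and cardX: "card X = a"
      and tch: "\<forall>Y\<in>J. \<not> sep G X Y" and un: "X \<union> \<Union>J = U" using JX by (auto simp: conf_def)
    have XU: "X \<subseteq> U" using un by blast
    have JU: "\<And>Y. Y \<in> J \<Longrightarrow> Y \<subseteq> U" using un by blast
    have finJ: "finite J" using fJ by (simp add: fam_def)
    have cardimg: "\<And>Y. Y \<subseteq> U \<Longrightarrow> card (f ` Y) = card Y"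
      using inj by (meson card_image inj_on_subset)
    have injJ: "inj_on ((`) f) J" using inj_on_image_Pow[OF inj] JU by (meson PowI inj_on_subset subsetI)
    have "fam H ((`) f ` J)"
      unfolding fam_def
    proof (intro conjI ballI impI)
      show "finite ((`) f ` J)" using finJ by simp
    next
      fix Y' assume "Y' \<in> (`) f ` J"
      then obtain Y where "Y \<in> J" "Y' = f ` Y" by blast
      thus "conn H Y'" using conn_iso[OF iso WH JU] fJ by (auto simp: fam_def)
    next
      fix Y' Z' assume "Y' \<in> (`) f ` J" "Z' \<in> (`) f ` J" "Y' \<noteq> Z'"
      then obtain Y Z where "Y \<in> J" "Z \<in> J" "Y' = f ` Y" "Z' = f ` Z" "Y \<noteq> Z" by blast
      thus "sep H Y' Z'" using sep_iso[OF iso JU JU] fJ by (auto simp: fam_def)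
    qed
    moreover have "prof ((`) f ` J) = MJ"
    proof -
      have "prof ((`) f ` J) = image_mset card (image_mset ((`) f) (mset_set J))"
        by (simp add: prof_def image_mset_mset_set[OF injJ])
      also have "\<dots> = image_mset card (mset_set J)"
        using cardimg JU finJ by (simp add: multiset.map_comp o_def) (rule image_mset_cong, simp)
      finally show ?thesis using pJ by (simp add: prof_def)
    qed
    moreover have "conn H (f ` X)" using conn_iso[OF iso WH XU cX] .
    moreover have "card (f ` X) = a" using cardimg XU cardX by simp
    moreover have "\<forall>Y'\<in>(`) f ` J. \<not> sep H (f ` X) Y'"
      using tch sep_iso[OF iso XU JU] by auto
    moreover have "f ` X \<union> \<Union>((`) f ` J) = W"
      using isoOn_img[OF iso] un by auto
    ultimately show "p \<in> conf H MJ a W" using p by (simp add: conf_def)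
  qed
  have "finite (conf H MJ a W)"
  proof (rule finite_subset)
    show "conf H MJ a W \<subseteq> Pow (Pow W) \<times> Pow W" by (auto simp: conf_def)
    show "finite (Pow (Pow W) \<times> Pow W)" using finW by simp
  qed
  thus ?thesis using card_inj_on_le[OF injF img] by simp
qed

lemma conf_eq:
  assumes iso: "isoOn G U H W f" and "U \<subseteq> fst G" "W \<subseteq> fst H" "finite U" "finite W"
  shows "card (conf G MJ a U) = card (conf H MJ a W)"
  using conf_le[OF iso assms(3,5), of MJ a] conf_le[OF isoOn_inv[OF iso] assms(2,4), of MJ a] by simp

lemma (in mdg) conf_ipath:
  assumes "ipath G s" shows "card (conf G MJ a (set s)) = cstd MJ a (length s)"
proof -
  have "card (conf (pstd (length s)) MJ a {0..<length s}) = card (conf G MJ a (set s))"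
    using conf_eq[OF ipath_iso[OF assms]] assms by (simp add: pstd_def ipath_def)
  thus ?thesis by (simp add: cstd_def)
qed

lemma conn_union:
  assumes cx: "conn G X" and cy: "conn G Y" and t: "\<not> sep G X Y"
  shows "conn G (X \<union> Y)"
proof -
  obtain x y where xy: "x \<in> X" "y \<in> Y" "x = y \<or> {x,y} \<in> snd G" using t unfolding sep_def by blast
  have xy_r: "(x,y) \<in> (adjS G (X \<union> Y))\<^sup>*"
    using xy by (auto simp: adjS_def)
  have rX: "\<And>a b. a \<in> X \<Longrightarrow> b \<in> X \<Longrightarrow> (a,b) \<in> (adjS G (X \<union> Y))\<^sup>*"
    using cx rtr_mono[of X "X \<union> Y"] by (auto simp: conn_def)
  have rY: "\<And>a b. a \<in> Y \<Longrightarrow> b \<in> Y \<Longrightarrow> (a,b) \<in> (adjS G (X \<union> Y))\<^sup>*"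
    using cy rtr_mono[of Y "X \<union> Y"] by (auto simp: conn_def)
  have "\<forall>a\<in>X \<union> Y. \<forall>b\<in>X \<union> Y. (a,b) \<in> (adjS G (X \<union> Y))\<^sup>*"
  proof (intro ballI)
    fix a b assume a: "a \<in> X \<union> Y" and b: "b \<in> X \<union> Y"
    have ax: "(a,x) \<in> (adjS G (X \<union> Y))\<^sup>*"
    proof (cases "a \<in> X")
      case True thus ?thesis using rX xy by blast
    next
      case False
      hence "(a,y) \<in> (adjS G (X \<union> Y))\<^sup>*" using rY a xy by blast
      thus ?thesis using rtr_sym[OF xy_r] by (meson rtrancl_trans)
    qed
    have xb: "(x,b) \<in> (adjS G (X \<union> Y))\<^sup>*"
    proof (cases "b \<in> X")
      case True thus ?thesis using rX xy by blast
    next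
      case False
      hence "(y,b) \<in> (adjS G (X \<union> Y))\<^sup>*" using rY b xy by blast
      thus ?thesis using xy_r by (meson rtrancl_trans)
    qed
    show "(a,b) \<in> (adjS G (X \<union> Y))\<^sup>*" using ax xb by (meson rtrancl_trans)
  qed
  thus ?thesis using cx cy by (auto simp: conn_def)
qed

lemma conn_union_fam:
  assumes "finite J" "conn G X" "\<forall>Y\<in>J. conn G Y \<and> \<not> sep G X Y"
  shows "conn G (X \<union> \<Union>J)"
  using assms
proof (induction J rule: finite_induct)
  case empty thus ?case by simp
next
  case (insert Y J)
  have c: "conn G (X \<union> \<Union>J)" using insert by simp
  have "\<not> sep G (X \<union> \<Union>J) Y" using insert.prems sep_mono[of G "X \<union> \<Union>J" Y X Y] by auto
  hence "conn G ((X \<union> \<Union>J) \<union> Y)" using conn_union[OF c] insert.prems by simp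
  thus ?case by (simp add: Un_ac)
qed

lemma card_U_le:
  assumes "fam G J" "finite X"
  shows "card (X \<union> \<Union>J) \<le> card X + sum_mset (prof J)"
proof -
  have "sum_mset (prof J) = sum card J" by (simp add: prof_def sum_unfold_sum_mset)
  moreover have "card (\<Union>J) \<le> sum card J" by (rule card_Union_le_sum_card)
  moreover have "card (X \<union> \<Union>J) \<le> card X + card (\<Union>J)" by (rule card_Un_le)
  ultimately show ?thesis by simp
qed

lemma conf_card_bound:
  assumes "(J,X) \<in> conf G MJ a U" "finite U"
  shows "card U \<le> a + sum_mset MJ"
proof -
  have "fam G J" "prof J = MJ" "card X = a" "X \<union> \<Union>J = U" using assms by (auto simp: conf_def)
  moreover have "finite X" using assms by (auto simp: conf_def intro: finite_subset)
  ultimately show ?thesis using card_U_le by metis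
qed

lemma cstd_bound: "cstd MJ a b \<noteq> 0 \<Longrightarrow> b \<le> a + sum_mset MJ"
proof -
  assume "cstd MJ a b \<noteq> 0"
  hence "conf (pstd b) MJ a {0..<b} \<noteq> {}" by (auto simp: cstd_def)
  then obtain J X where "(J,X) \<in> conf (pstd b) MJ a {0..<b}" by auto
  thus ?thesis using conf_card_bound by fastforce
qed


lemma sep_UnL: "sep G A Z \<Longrightarrow> sep G B Z \<Longrightarrow> sep G (A \<union> B) Z"
  by (auto simp: sep_def)

lemma sep_UnionL: "(\<And>Y. Y \<in> J \<Longrightarrow> sep G Y Z) \<Longrightarrow> sep G (\<Union>J) Z"
  by (auto simp: sep_def)

lemma count_prof: "finite Q \<Longrightarrow> count (prof Q) b = card {U\<in>Q. card U = b}"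
proof (induction Q rule: finite_induct)
  case empty thus ?case by (simp add: prof_def)
next
  case (insert Y Q)
  have "prof (insert Y Q) = add_mset (card Y) (prof Q)" using insert prof_insert by metis
  moreover have "{U\<in>insert Y Q. card U = b} = (if card Y = b then insert Y {U\<in>Q. card U = b} else {U\<in>Q. card U = b})"
    by auto
  ultimately show ?case using insert by auto
qed

lemma fam_conn_sub: "fam G P \<Longrightarrow> Y \<in> P \<Longrightarrow> conn G Y"
  by (simp add: fam_def)

lemma fam_sep: "fam G P \<Longrightarrow> Y \<in> P \<Longrightarrow> Z \<in> P \<Longrightarrow> Y \<noteq> Z \<Longrightarrow> sep G Y Z"
  by (simp add: fam_def)

lemma prof_empty_iff: "finite J \<Longrightarrow> prof J = {#} \<longleftrightarrow> J = {}"
  by (simp add: prof_def mset_set_empty_iff)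

lemma prof_diff: "finite P \<Longrightarrow> J \<subseteq> P \<Longrightarrow> prof (P - J) = prof P - prof J"
  unfolding prof_def
  by (simp add: mset_set_Diff image_mset_Diff subset_imp_msubset_mset_set)

lemma prof_sub: "finite P \<Longrightarrow> J \<subseteq> P \<Longrightarrow> prof J \<subseteq># prof P"
  unfolding prof_def by (simp add: image_mset_subseteq_mono subset_imp_msubset_mset_set)

lemma prof_Un: "finite A \<Longrightarrow> finite B \<Longrightarrow> A \<inter> B = {} \<Longrightarrow> prof (A \<union> B) = prof A + prof B"
  unfolding prof_def by (simp add: mset_set_Union)

context mdg begin

definition GP where "GP M a = {(P,X). P \<in> famset G M \<and> X \<in> Iv G a \<and> (\<forall>Y\<in>P. sep G X Y)}"
definition BadS where "BadS M a = {(P,X). P \<in> famset G M \<and> X \<in> Iv G a \<and> (\<exists>Y\<in>P. \<not> sep G X Y)}"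
definition tJ where "tJ P X = {Y\<in>P. \<not> sep G X Y}"
definition tU where "tU P X = X \<union> \<Union>(tJ P X)"
definition BadK where "BadK M a MJ b = {(P,X) \<in> BadS M a. prof (tJ P X) = MJ \<and> card (tU P X) = b}"
definition Om where "Om M a MJ b = Sigma (Sigma (famset G (add_mset b (M - MJ))) (\<lambda>Q. {U\<in>Q. card U = b}))
    (\<lambda>(Q,U). conf G MJ a U)"

lemma fin_famset: "finite (famset G M)"
proof (rule finite_subset)
  show "famset G M \<subseteq> Pow (Pow (fst G))" by (auto simp: famset_def fam_def conn_def)
  show "finite (Pow (Pow (fst G)))" using finV by simp
qed

lemma fin_Iv: "finite (Iv G a)"
proof (rule finite_subset)
  show "Iv G a \<subseteq> Pow (fst G)" by (auto simp: Iv_def conn_def)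
  show "finite (Pow (fst G))" using finV by simp
qed

lemma conn_fin: "conn G X \<Longrightarrow> finite X"
  using finV finite_subset by (auto simp: conn_def)

lemma H1: "card (GP M a) = card (famset G (add_mset a M)) * count (add_mset a M) a"
proof -
  let ?S = "Sigma (famset G (add_mset a M)) (\<lambda>Q. {X\<in>Q. card X = a})"
  have "bij_betw (\<lambda>(P,X). (insert X P, X)) (GP M a) ?S"
  proof (rule bij_betw_byWitness[where f' = "\<lambda>(Q,X). (Q - {X}, X)"])
    show "\<forall>p\<in>GP M a. (\<lambda>(Q,X). (Q - {X}, X)) ((\<lambda>(P,X). (insert X P, X)) p) = p"
    proof
      fix p assume "p \<in> GP M a"
      then obtain P X where p: "p = (P,X)" "P \<in> famset G M" "X \<in> Iv G a" "\<forall>Y\<in>P. sep G X Y"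
        by (auto simp: GP_def)
      have "conn G X" using p by (simp add: Iv_def)
      hence "X \<notin> P" using p sep_self[of G X] by blast
      thus "(\<lambda>(Q,X). (Q - {X}, X)) ((\<lambda>(P,X). (insert X P, X)) p) = p" using p by simp
    qed
    show "\<forall>q\<in>?S. (\<lambda>(P,X). (insert X P, X)) ((\<lambda>(Q,X). (Q - {X}, X)) q) = q" by auto
    show "(\<lambda>(P,X). (insert X P, X)) ` GP M a \<subseteq> ?S"
    proof
      fix q assume "q \<in> (\<lambda>(P,X). (insert X P, X)) ` GP M a"
      then obtain P X where q: "q = (insert X P, X)" "P \<in> famset G M" "X \<in> Iv G a" "\<forall>Y\<in>P. sep G X Y"
        by (auto simp: GP_def)
      have fP: "fam G P" "prof P = M" using q by (auto simp: famset_def)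
      have cX: "conn G X" "card X = a" using q by (auto simp: Iv_def)
      have "X \<notin> P" using q sep_self cX by blast
      have "fam G (insert X P)" using fam_insert[OF fP(1) cX(1)] q by blast
      moreover have "prof (insert X P) = add_mset a M"
        using prof_insert[of P X] fP \<open>X \<notin> P\<close> cX by (simp add: fam_def)
      ultimately show "q \<in> ?S" using q cX by (simp add: famset_def)
    qed
    show "(\<lambda>(Q,X). (Q - {X}, X)) ` ?S \<subseteq> GP M a"
    proof
      fix p assume "p \<in> (\<lambda>(Q,X). (Q - {X}, X)) ` ?S"
      then obtain Q X where p: "p = (Q - {X}, X)" "Q \<in> famset G (add_mset a M)" "X \<in> Q" "card X = a"
        by auto
      have fQ: "fam G Q" "prof Q = add_mset a M" using p by (auto simp: famset_def)
      have finQ: "finite Q" using fQ by (simp add: fam_def)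
      have "fam G (Q - {X})" using fam_subset fQ by blast
      moreover have "prof (Q - {X}) = M" using prof_remove[OF finQ p(3)] fQ p by simp
      moreover have "X \<in> Iv G a" using fQ p by (auto simp: Iv_def fam_def)
      moreover have "\<forall>Y\<in>Q - {X}. sep G X Y" using fQ p by (auto simp: fam_def)
      ultimately show "p \<in> GP M a" using p by (simp add: GP_def famset_def)
    qed
  qed
  hence "card (GP M a) = card ?S" by (rule bij_betw_same_card)
  also have "\<dots> = (\<Sum>Q\<in>famset G (add_mset a M). card {X\<in>Q. card X = a})"
    using fin_famset by (intro card_SigmaI) (auto simp: famset_def fam_def)
  also have "\<dots> = (\<Sum>Q\<in>famset G (add_mset a M). count (add_mset a M) a)"
  proof (rule sum.cong)
    fix Q assume "Q \<in> famset G (add_mset a M)"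
    hence "finite Q" "prof Q = add_mset a M" by (auto simp: famset_def fam_def)
    thus "card {X\<in>Q. card X = a} = count (add_mset a M) a" using count_prof by metis
  qed simp
  finally show ?thesis by simp
qed

lemma H2: "card (famset G M) * card (Iv G a) = card (GP M a) + card (BadS M a)"
proof -
  have "famset G M \<times> Iv G a = GP M a \<union> BadS M a" by (auto simp: GP_def BadS_def)
  moreover have "GP M a \<inter> BadS M a = {}" by (auto simp: GP_def BadS_def)
  moreover have "finite (GP M a)" "finite (BadS M a)"
    using fin_famset fin_Iv by (auto intro: finite_subset[of _ "famset G M \<times> Iv G a"] simp: GP_def BadS_def)
  ultimately show ?thesis by (metis card_Un_disjoint card_cartesian_product)
qed

end

context mdg begin

lemma BadK_Om:
  assumes MJ: "MJ \<subseteq># M" "MJ \<noteq> {#}"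
  shows "card (BadK M a MJ b) = card (Om M a MJ b)"
proof -
  let ?phi = "\<lambda>(P,X). ((insert (tU P X) (P - tJ P X), tU P X), (tJ P X, X))"
  let ?psi = "\<lambda>((Q::'a set set, U::'a set), (J::'a set set, X::'a set)). ((Q - {U}) \<union> J, X)"
  have props: "fam G (tJ P X) \<and> conn G (tU P X) \<and> tU P X \<notin> P - tJ P X \<and> (\<forall>Z\<in>P - tJ P X. sep G (tU P X) Z)"
    if "(P,X) \<in> BadK M a MJ b" for P X
  proof -
    have fP: "fam G P" and cX: "conn G X" using that by (auto simp: BadK_def BadS_def famset_def Iv_def)
    have fJ: "fam G (tJ P X)" using fam_subset[OF fP] by (auto simp: tJ_def)
    have finJ: "finite (tJ P X)" using fJ by (simp add: fam_def)
    have allJ: "\<forall>Y\<in>tJ P X. conn G Y \<and> \<not> sep G X Y"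
      using fam_conn_sub[OF fJ] by (simp add: tJ_def)
    have cU: "conn G (tU P X)" unfolding tU_def
      by (rule conn_union_fam[OF finJ cX allJ])
    have sepZ: "sep G (tU P X) Z" if Z: "Z \<in> P - tJ P X" for Z
    proof -
      have "sep G X Z" using Z by (auto simp: tJ_def)
      moreover have "sep G (\<Union>(tJ P X)) Z"
      proof (rule sep_UnionL)
        fix Y assume "Y \<in> tJ P X"
        hence "Y \<in> P" "Y \<noteq> Z" using Z by (auto simp: tJ_def)
        thus "sep G Y Z" using fam_sep[OF fP \<open>Y \<in> P\<close> _ \<open>Y \<noteq> Z\<close>] Z by simp
      qed
      ultimately show ?thesis unfolding tU_def by (rule sep_UnL)
    qed
    have "tU P X \<notin> P - tJ P X"
    proof
      assume "tU P X \<in> P - tJ P X"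
      hence "sep G (tU P X) (tU P X)" by (rule sepZ)
      thus False using sep_self[OF cU] by blast
    qed
    thus ?thesis using fJ cU sepZ by blast
  qed
  have bij: "bij_betw ?phi (BadK M a MJ b) (Om M a MJ b)"
  proof (rule bij_betw_byWitness[where f' = ?psi])
    show "\<forall>p\<in>BadK M a MJ b. ?psi (?phi p) = p"
    proof
      fix p assume p: "p \<in> BadK M a MJ b"
      then obtain P X where pPX: "p = (P,X)" by (cases p)
      have "tU P X \<notin> P - tJ P X" using props p pPX by blast
      moreover have "tJ P X \<subseteq> P" by (auto simp: tJ_def)
      ultimately have "(insert (tU P X) (P - tJ P X) - {tU P X}) \<union> tJ P X = P" by auto
      thus "?psi (?phi p) = p" using pPX by simp
    qed
    show "?phi ` BadK M a MJ b \<subseteq> Om M a MJ b"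
    proof
      fix q assume "q \<in> ?phi ` BadK M a MJ b"
      then obtain P X where PX: "(P,X) \<in> BadK M a MJ b" and q: "q = ?phi (P,X)" by auto
      have fP: "fam G P" and pP: "prof P = M" and cX: "conn G X" and cardX: "card X = a"
        and pJ: "prof (tJ P X) = MJ" and cU: "card (tU P X) = b"
        using PX by (auto simp: BadK_def BadS_def famset_def Iv_def)
      have pr: "fam G (tJ P X)" "conn G (tU P X)" "tU P X \<notin> P - tJ P X" "\<forall>Z\<in>P - tJ P X. sep G (tU P X) Z"
        using props[OF PX] by auto
      have finP: "finite P" using fP by (simp add: fam_def)
      have JP: "tJ P X \<subseteq> P" by (auto simp: tJ_def)
      have fQ: "fam G (insert (tU P X) (P - tJ P X))"
        using fam_insert[OF fam_subset[OF fP, of "P - tJ P X"] pr(2)] pr(4) by blast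
      have "prof (insert (tU P X) (P - tJ P X)) = add_mset (card (tU P X)) (prof (P - tJ P X))"
        using prof_insert[of "P - tJ P X" "tU P X"] finP pr(3) by simp
      also have "\<dots> = add_mset b (M - MJ)" using prof_diff[OF finP JP] pP pJ cU by simp
      finally have pQ: "prof (insert (tU P X) (P - tJ P X)) = add_mset b (M - MJ)" .
      have conf: "(tJ P X, X) \<in> conf G MJ a (tU P X)"
        using pr(1) pJ cX cardX by (auto simp: conf_def tJ_def tU_def)
      show "q \<in> Om M a MJ b" using q fQ pQ cU conf by (simp add: Om_def famset_def)
    qed
    show "\<forall>w\<in>Om M a MJ b. ?phi (?psi w) = w"
    proof
      fix w assume w: "w \<in> Om M a MJ b"
      then obtain Q U J X where wq: "w = ((Q,U),(J,X))" by (metis prod.collapse)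
      have fQ: "fam G Q" and UQ: "U \<in> Q" and cf: "(J,X) \<in> conf G MJ a U"
        using w wq by (auto simp: Om_def famset_def)
      have fJ: "fam G J" and un: "X \<union> \<Union>J = U" and tch: "\<forall>Y\<in>J. \<not> sep G X Y"
        using cf by (auto simp: conf_def)
      have XU: "X \<subseteq> U" using un by blast
      have sepQ: "\<And>Y. Y \<in> Q - {U} \<Longrightarrow> sep G X Y"
      proof -
        fix Y assume Y: "Y \<in> Q - {U}"
        hence "sep G U Y" using fam_sep[OF fQ UQ, of Y] by blast
        thus "sep G X Y" using sep_mono[of G U Y X Y] XU by blast
      qed
      have disj: "(Q - {U}) \<inter> J = {}"
      proof (rule ccontr)
        assume "(Q - {U}) \<inter> J \<noteq> {}"
        then obtain Z where "Z \<in> Q - {U}" "Z \<in> J" by blast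
        thus False using sepQ tch by blast
      qed
      have tJe: "tJ ((Q - {U}) \<union> J) X = J" using sepQ tch by (auto simp: tJ_def)
      have "tU ((Q - {U}) \<union> J) X = U" using tJe un by (simp add: tU_def)
      moreover have "insert U ((Q - {U}) \<union> J - J) = Q" using disj UQ by auto
      ultimately show "?phi (?psi w) = w" using wq tJe by simp
    qed
    show "?psi ` Om M a MJ b \<subseteq> BadK M a MJ b"
    proof
      fix p assume "p \<in> ?psi ` Om M a MJ b"
      then obtain w where w: "w \<in> Om M a MJ b" and p: "p = ?psi w" by blast
      then obtain Q U J X where wq: "w = ((Q,U),(J,X))" by (metis prod.collapse)
      have fQ: "fam G Q" and pQ: "prof Q = add_mset b (M - MJ)" and UQ: "U \<in> Q" and cardU: "card U = b"
        and cf: "(J,X) \<in> conf G MJ a U"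
        using w wq by (auto simp: Om_def famset_def)
      have fJ: "fam G J" and pJ: "prof J = MJ" and cX: "conn G X" and cardX: "card X = a"
        and un: "X \<union> \<Union>J = U" and tch: "\<forall>Y\<in>J. \<not> sep G X Y"
        using cf by (auto simp: conf_def)
      have XU: "X \<subseteq> U" using un by blast
      have JU: "\<And>Z. Z \<in> J \<Longrightarrow> Z \<subseteq> U" using un by blast
      have sepQU: "\<And>Y. Y \<in> Q - {U} \<Longrightarrow> sep G Y U" using fam_sep[OF fQ _ UQ] by blast
      have sepQ: "\<And>Y. Y \<in> Q - {U} \<Longrightarrow> sep G X Y"
      proof -
        fix Y assume Y: "Y \<in> Q - {U}"
        hence "sep G U Y" using sep_sym[OF sepQU[OF Y]] by blast
        thus "sep G X Y" using sep_mono[of G U Y X Y] XU by blast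
      qed
      have disj: "(Q - {U}) \<inter> J = {}"
      proof (rule ccontr)
        assume "(Q - {U}) \<inter> J \<noteq> {}"
        then obtain Z where "Z \<in> Q - {U}" "Z \<in> J" by blast
        thus False using sepQ tch by blast
      qed
      let ?P = "(Q - {U}) \<union> J"
      have finQ: "finite Q" and finJ: "finite J" using fQ fJ by (auto simp: fam_def)
      have fP: "fam G ?P"
        unfolding fam_def
      proof (intro conjI ballI impI)
        show "finite ?P" using finQ finJ by simp
      next
        fix Y assume "Y \<in> ?P" thus "conn G Y" using fQ fJ by (auto simp: fam_def)
      next
        fix Y Z assume Y: "Y \<in> ?P" and Z: "Z \<in> ?P" and YZ: "Y \<noteq> Z"
        show "sep G Y Z"
        proof (cases "Y \<in> J")
          case True
          show ?thesis
          proof (cases "Z \<in> J")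
            case True thus ?thesis using \<open>Y \<in> J\<close> YZ fam_sep[OF fJ] by blast
          next
            case False
            hence "Z \<in> Q - {U}" using Z by blast
            hence "sep G U Z" using sep_sym[OF sepQU] by blast
            thus ?thesis using sep_mono[of G U Z Y Z] JU[OF True] by blast
          qed
        next
          case False
          hence YQ: "Y \<in> Q - {U}" using Y by blast
          show ?thesis
          proof (cases "Z \<in> J")
            case True
            thus ?thesis using sep_mono[of G Y U Y Z] sepQU[OF YQ] JU[OF True] by blast
          next
            case False
            hence "Z \<in> Q - {U}" using Z by blast
            thus ?thesis using YQ YZ fam_sep[OF fQ] by blast
          qed
        qed
      qed
      have "prof ?P = prof (Q - {U}) + prof J" using prof_Un[OF _ finJ disj] finQ by simp
      also have "prof (Q - {U}) = M - MJ" using prof_remove[OF finQ UQ] pQ cardU by simp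
      finally have pP: "prof ?P = M" using pJ MJ(1) by simp
      have tJe: "tJ ?P X = J" using sepQ tch by (auto simp: tJ_def)
      have "J \<noteq> {}" using pJ MJ(2) prof_empty_iff[OF finJ] by blast
      then obtain Y where "Y \<in> J" by blast
      hence ex: "\<exists>Y\<in>?P. \<not> sep G X Y" using tch by blast
      have "tU ?P X = U" using tJe un by (simp add: tU_def)
      thus "p \<in> BadK M a MJ b"
        using p wq fP pP cX cardX ex tJe pJ cardU
        by (simp add: BadK_def BadS_def famset_def Iv_def)
    qed
  qed
  thus ?thesis by (rule bij_betw_same_card)
qed

end

lemma sub_notin: "N \<subseteq># add_mset x M \<Longrightarrow> x \<notin># N \<Longrightarrow> N \<subseteq># M"
  by (metis inter_add_right1 subset_mset.inf.orderE subset_mset.inf.orderI)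

lemma sub_in: "N \<subseteq># add_mset x M \<Longrightarrow> x \<in># N \<Longrightarrow> N - {#x#} \<subseteq># M"
  using subset_eq_diff_conv by fastforce

lemma fin_sub: "finite {N. N \<subseteq># M}"
proof (induction M)
  case empty thus ?case by simp
next
  case (add x M)
  have "{N. N \<subseteq># add_mset x M} \<subseteq> {N. N \<subseteq># M} \<union> add_mset x ` {N. N \<subseteq># M}"
  proof
    fix N assume N: "N \<in> {N. N \<subseteq># add_mset x M}"
    show "N \<in> {N. N \<subseteq># M} \<union> add_mset x ` {N. N \<subseteq># M}"
    proof (cases "x \<in># N")
      case True
      hence "N = add_mset x (N - {#x#})" by simp
      moreover have "N - {#x#} \<subseteq># M" using sub_in N True by simp
      ultimately show ?thesis by blast
    next
      case False
      hence "N \<subseteq># M" using sub_notin N by simp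
      thus ?thesis by simp
    qed
  qed
  moreover have "finite ({N. N \<subseteq># M} \<union> add_mset x ` {N. N \<subseteq># M})" using add by simp
  ultimately show ?case by (rule finite_subset)
qed

lemma fin_conf: "finite U \<Longrightarrow> finite (conf G MJ a U)"
proof -
  assume "finite U"
  moreover have "conf G MJ a U \<subseteq> Pow (Pow U) \<times> Pow U" by (auto simp: conf_def)
  ultimately show ?thesis by (meson finite_Pow_iff finite_SigmaI finite_subset)
qed

context mdg begin

lemma card_Om:
  assumes bk: "b \<le> k"
  shows "card (Om M a MJ b) = card (famset G (add_mset b (M - MJ))) * count (add_mset b (M - MJ)) b * cstd MJ a b"
proof -
  let ?M' = "add_mset b (M - MJ)"
  let ?S1 = "Sigma (famset G ?M') (\<lambda>Q. {U\<in>Q. card U = b})"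
  have finS1: "finite ?S1"
    using fin_famset by (intro finite_SigmaI) (auto simp: famset_def fam_def)
  have "card (Om M a MJ b) = (\<Sum>x\<in>?S1. card ((\<lambda>(Q,U). conf G MJ a U) x))"
    unfolding Om_def
  proof (rule card_SigmaI[OF finS1])
    show "\<forall>x\<in>?S1. finite ((\<lambda>(Q,U). conf G MJ a U) x)"
    proof
      fix x assume "x \<in> ?S1"
      then obtain Q U where "x = (Q,U)" "Q \<in> famset G ?M'" "U \<in> Q" by auto
      hence "conn G U" by (auto simp: famset_def fam_def)
      hence "finite U" by (rule conn_fin)
      thus "finite ((\<lambda>(Q,U). conf G MJ a U) x)" using \<open>x = (Q,U)\<close> fin_conf by simp
    qed
  qed
  also have "\<dots> = (\<Sum>x\<in>?S1. cstd MJ a b)"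
  proof (rule sum.cong)
    fix x assume "x \<in> ?S1"
    then obtain Q U where x: "x = (Q,U)" "Q \<in> famset G ?M'" "U \<in> Q" "card U = b" by auto
    hence "conn G U" by (auto simp: famset_def fam_def)
    then obtain s where s: "ipath G s" "set s = U" using conn_ipath x bk by auto
    have "length s = b" using ipath_len[OF s(1)] s x by simp
    thus "card ((\<lambda>(Q,U). conf G MJ a U) x) = cstd MJ a b" using conf_ipath[OF s(1)] s x by simp
  qed simp
  also have "\<dots> = card ?S1 * cstd MJ a b" by simp
  also have "card ?S1 = (\<Sum>Q\<in>famset G ?M'. card {U\<in>Q. card U = b})"
    using fin_famset by (intro card_SigmaI) (auto simp: famset_def fam_def)
  also have "\<dots> = (\<Sum>Q\<in>famset G ?M'. count ?M' b)"
  proof (rule sum.cong)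
    fix Q assume "Q \<in> famset G ?M'"
    hence "finite Q" "prof Q = ?M'" by (auto simp: famset_def fam_def)
    thus "card {U\<in>Q. card U = b} = count ?M' b" using count_prof by metis
  qed simp
  finally show ?thesis by simp
qed

definition SM where "SM M = {MJ. MJ \<subseteq># M \<and> MJ \<noteq> {#}}"

lemma fin_SM: "finite (SM M)"
  using fin_sub[of M] by (rule finite_subset[rotated]) (auto simp: SM_def)

lemma H3:
  assumes sk: "sum_mset M + a \<le> k"
  shows "card (BadS M a) = (\<Sum>MJ\<in>SM M. \<Sum>b\<in>{..k}.
     card (famset G (add_mset b (M - MJ))) * count (add_mset b (M - MJ)) b * cstd MJ a b)"
proof -
  have finB: "finite (BadS M a)"
    using fin_famset fin_Iv by (auto intro: finite_subset[of _ "famset G M \<times> Iv G a"] simp: BadS_def)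
  have eq: "BadS M a = (\<Union>p\<in>SM M \<times> {..k}. BadK M a (fst p) (snd p))"
  proof
    show "(\<Union>p\<in>SM M \<times> {..k}. BadK M a (fst p) (snd p)) \<subseteq> BadS M a" by (auto simp: BadK_def)
    show "BadS M a \<subseteq> (\<Union>p\<in>SM M \<times> {..k}. BadK M a (fst p) (snd p))"
    proof
      fix x assume x: "x \<in> BadS M a"
      then obtain P X where PX: "x = (P,X)" "P \<in> famset G M" "X \<in> Iv G a" "\<exists>Y\<in>P. \<not> sep G X Y"
        by (auto simp: BadS_def)
      have fP: "fam G P" "prof P = M" using PX by (auto simp: famset_def)
      have finP: "finite P" using fP by (simp add: fam_def)
      have JP: "tJ P X \<subseteq> P" by (auto simp: tJ_def)
      have fJ: "fam G (tJ P X)" using fam_subset[OF fP(1) JP] .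
      have finJ: "finite (tJ P X)" using finP JP finite_subset by blast
      have sub: "prof (tJ P X) \<subseteq># M" using prof_sub[OF finP JP] fP by simp
      have "tJ P X \<noteq> {}" using PX by (auto simp: tJ_def)
      hence ne: "prof (tJ P X) \<noteq> {#}" using prof_empty_iff[OF finJ] by simp
      have cX: "conn G X" "card X = a" using PX by (auto simp: Iv_def)
      have "card (tU P X) \<le> card X + sum_mset (prof (tJ P X))"
        unfolding tU_def using card_U_le[OF fJ conn_fin[OF cX(1)]] .
      moreover have "sum_mset (prof (tJ P X)) \<le> sum_mset M" using sub by (auto simp: subset_mset.le_iff_add)
      ultimately have "card (tU P X) \<le> k" using cX sk by simp
      hence "(prof (tJ P X), card (tU P X)) \<in> SM M \<times> {..k}" using sub ne by (simp add: SM_def)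
      moreover have "x \<in> BadK M a (prof (tJ P X)) (card (tU P X))" using x PX by (simp add: BadK_def)
      ultimately show "x \<in> (\<Union>p\<in>SM M \<times> {..k}. BadK M a (fst p) (snd p))" by force
    qed
  qed
  have "card (BadS M a) = (\<Sum>p\<in>SM M \<times> {..k}. card (BadK M a (fst p) (snd p)))"
    unfolding eq
  proof (rule card_UN_disjoint)
    show "finite (SM M \<times> {..k})" using fin_SM[of M] by simp
    show "\<forall>i\<in>SM M \<times> {..k}. finite (BadK M a (fst i) (snd i))"
      using finB by (auto simp: BadK_def intro: finite_subset[of _ "BadS M a"])
    show "\<forall>i\<in>SM M \<times> {..k}. \<forall>j\<in>SM M \<times> {..k}. i \<noteq> j \<longrightarrow> BadK M a (fst i) (snd i) \<inter> BadK M a (fst j) (snd j) = {}"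
      by (auto simp: BadK_def prod_eq_iff)
  qed
  also have "\<dots> = (\<Sum>MJ\<in>SM M. \<Sum>b\<in>{..k}. card (BadK M a MJ b))"
    by (simp add: sum.cartesian_product split_def)
  also have "\<dots> = (\<Sum>MJ\<in>SM M. \<Sum>b\<in>{..k}.
     card (famset G (add_mset b (M - MJ))) * count (add_mset b (M - MJ)) b * cstd MJ a b)"
  proof (intro sum.cong refl)
    fix MJ b assume "MJ \<in> SM M" "b \<in> {..k}"
    thus "card (BadK M a MJ b) = card (famset G (add_mset b (M - MJ))) * count (add_mset b (M - MJ)) b * cstd MJ a b"
      using BadK_Om card_Om by (simp add: SM_def)
  qed
  finally show ?thesis .
qed

end

context mdg begin

definition W where "W c = {s. ipath G s \<and> length s = c}"
definition Nb where "Nb v = {u\<in>fst G. {u,v} \<in> snd G}"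

lemma fin_W: "finite (W c)"
proof (rule finite_subset)
  show "W c \<subseteq> {s. set s \<subseteq> fst G \<and> length s = c}" by (auto simp: W_def ipath_def)
  show "finite {s. set s \<subseteq> fst G \<and> length s = c}" using finV by (rule finite_lists_length_eq)
qed

lemma fin_Nb: "finite (Nb v)" using finV by (simp add: Nb_def)

lemma deg_Nb: "degree G v = card (Nb v)" by (simp add: degree_def Nb_def)

lemma ipath_Iv: "ipath G s \<Longrightarrow> s \<noteq> [] \<Longrightarrow> set s \<in> Iv G (length s)"
  using ipath_conn ipath_len by (simp add: Iv_def)

lemma W_Iv:
  assumes c2: "2 \<le> c" and ck: "c \<le> k"
  shows "card (W c) = 2 * card (Iv G c)"
proof -
  let ?F = "\<lambda>X. {t\<in>W c. set t = X}"
  have eq: "W c = (\<Union>X\<in>Iv G c. ?F X)"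
  proof
    show "W c \<subseteq> (\<Union>X\<in>Iv G c. ?F X)"
    proof
      fix t assume t: "t \<in> W c"
      hence it: "ipath G t" and lt: "length t = c" by (auto simp: W_def)
      hence "t \<noteq> []" using c2 by auto
      hence "set t \<in> Iv G (length t)" by (rule ipath_Iv[OF it])
      hence "set t \<in> Iv G c" using lt by simp
      thus "t \<in> (\<Union>X\<in>Iv G c. ?F X)" using t by blast
    qed
  qed auto
  have two: "card (?F X) = 2" if X: "X \<in> Iv G c" for X
  proof -
    have "conn G X" "card X = c" using X by (auto simp: Iv_def)
    then obtain s where s: "ipath G s" "set s = X" using conn_ipath ck by auto
    have ls: "length s = c" using ipath_len[OF s(1)] s \<open>card X = c\<close> by simp
    hence ne: "s \<noteq> []" using c2 by auto
    have "?F X = {s, rev s}"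
    proof
      show "?F X \<subseteq> {s, rev s}"
      proof
        fix t assume "t \<in> ?F X"
        hence "ipath G t" "set s = set t" using s by (auto simp: W_def)
        thus "t \<in> {s, rev s}" using ipath_uniq[OF s(1) _ _ ne] by blast
      qed
      show "{s, rev s} \<subseteq> ?F X" using s ls ipath_rev[OF s(1)] by (auto simp: W_def)
    qed
    moreover have "s \<noteq> rev s"
    proof
      assume "s = rev s"
      hence "s!0 = rev s!0" by (rule arg_cong[where f="\<lambda>l. l!0"])
      also have "\<dots> = s!(c - 1)" using ls c2 rev_nth[of 0 s] by simp
      finally have "s!0 = s!(c-1)" .
      moreover have ds: "distinct s" using s by (simp add: ipath_def)
      moreover have l0: "0 < length s" and l1: "c - 1 < length s" using ls c2 by auto
      ultimately have "0 = c - 1" using nth_eq_iff_index_eq[OF ds l0 l1] by simp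
      thus False using c2 by simp
    qed
    ultimately show ?thesis by simp
  qed
  have "card (\<Union>X\<in>Iv G c. ?F X) = (\<Sum>X\<in>Iv G c. card (?F X))"
  proof (rule card_UN_disjoint)
    show "finite (Iv G c)" by (rule fin_Iv)
    show "\<forall>i\<in>Iv G c. finite (?F i)" using fin_W by simp
  qed auto
  hence "card (W c) = (\<Sum>X\<in>Iv G c. card (?F X))" using eq by simp
  also have "\<dots> = (\<Sum>X\<in>Iv G c. 2)" using two by (rule sum.cong[OF refl])
  finally show ?thesis by simp
qed

lemma Iv0: "card (Iv G 0) = 0"
proof -
  have "Iv G 0 = {}"
  proof (rule ccontr)
    assume "Iv G 0 \<noteq> {}"
    then obtain X where "conn G X" "card X = 0" by (auto simp: Iv_def)
    thus False using conn_fin[of X] conn_ne[of G X] by simp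
  qed
  thus ?thesis by simp
qed

lemma Iv1: "card (Iv G 1) = card (fst G)"
proof -
  have "Iv G 1 = (\<lambda>v. {v}) ` fst G"
  proof
    show "Iv G 1 \<subseteq> (\<lambda>v. {v}) ` fst G"
    proof
      fix X assume "X \<in> Iv G 1"
      hence "conn G X" "card X = 1" by (auto simp: Iv_def)
      then obtain v where "X = {v}" using card_1_singletonE by blast
      thus "X \<in> (\<lambda>v. {v}) ` fst G" using \<open>conn G X\<close> by (auto simp: conn_def)
    qed
    show "(\<lambda>v. {v}) ` fst G \<subseteq> Iv G 1" by (auto simp: Iv_def conn_def)
  qed
  thus ?thesis by (simp add: card_image)
qed

lemma Iv2: "card (Iv G 2) = card (snd G)"
proof -
  have "Iv G 2 = snd G"
  proof
    show "Iv G 2 \<subseteq> snd G"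
    proof
      fix X assume "X \<in> Iv G 2"
      hence c: "conn G X" "card X = 2" by (auto simp: Iv_def)
      then obtain u v where uv: "X = {u,v}" "u \<noteq> v" using card_2_iff[of X] by blast
      have "(u,v) \<in> (adjS G X)\<^sup>*" using c uv by (auto simp: conn_def)
      then obtain y w where "(y,w) \<in> adjS G X" "y \<in> {u}" "w \<notin> {u}"
        using rtr_exit[of u v "adjS G X" "{u}"] uv by auto
      hence "y = u" "w = v" "{u,v} \<in> snd G" using uv by (auto simp: adjS_def)
      thus "X \<in> snd G" using uv by simp
    qed
    show "snd G \<subseteq> Iv G 2"
    proof
      fix e assume e: "e \<in> snd G"
      then obtain u v where uv: "e = {u,v}" "u \<noteq> v" "u \<in> fst G" "v \<in> fst G"
        using sg by (auto simp: simple_graph_def)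
      have e1: "{u,v} \<in> snd G" using uv e by simp
      have e2: "{v,u} \<in> snd G" using e1 by (metis insert_commute)
      have "\<forall>i<length [u,v]. \<forall>j<length [u,v]. ({[u,v]!i, [u,v]!j} \<in> snd G \<longleftrightarrow> (j = Suc i \<or> i = Suc j))"
      proof (intro allI impI)
        fix i j assume "i < length [u,v]" "j < length [u,v]"
        hence "i = 0 \<or> i = 1" "j = 0 \<or> j = 1" by auto
        thus "{[u,v]!i, [u,v]!j} \<in> snd G \<longleftrightarrow> (j = Suc i \<or> i = Suc j)"
          using e1 e2 noloop[of u] noloop[of v] by auto
      qed
      hence "ipath G [u,v]" using uv by (simp add: ipath_def)
      hence "set [u,v] \<in> Iv G (length [u,v])" using ipath_Iv[of "[u,v]"] by simp
      thus "e \<in> Iv G 2" using uv by (simp add: numeral_2_eq_2)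
    qed
  qed
  thus ?thesis by simp
qed

end

lemma ipath_appendD:
  assumes a: "ipath G (s @ t)" shows "ipath G s"
proof -
  have "\<forall>i<length s. \<forall>j<length s. ({s!i, s!j} \<in> snd G \<longleftrightarrow> (j = Suc i \<or> i = Suc j))"
  proof (intro allI impI)
    fix i j assume ij: "i < length s" "j < length s"
    have "{(s@t)!i, (s@t)!j} \<in> snd G \<longleftrightarrow> (j = Suc i \<or> i = Suc j)"
      using a ij unfolding ipath_def by simp
    thus "{s!i, s!j} \<in> snd G \<longleftrightarrow> (j = Suc i \<or> i = Suc j)" using ij by (simp add: nth_append)
  qed
  thus ?thesis using a by (simp add: ipath_def)
qed

context mdg begin

definition ext where "ext s = {w. ipath G (s @ [w])}"

lemma Nb_mem: "w \<in> Nb u \<longleftrightarrow> {u,w} \<in> snd G"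
  using edge by (auto simp: Nb_def insert_commute)

lemma ext1: "v \<in> fst G \<Longrightarrow> 1 < k \<Longrightarrow> ext [v] = Nb v"
proof
  assume v: "v \<in> fst G" and k1: "1 < k"
  show "ext [v] \<subseteq> Nb v"
  proof
    fix w assume "w \<in> ext [v]"
    hence "ipath G [v,w]" by (simp add: ext_def)
    hence "{[v,w]!0, [v,w]!1} \<in> snd G" using ipath_edge[of G "[v,w]" 0] by simp
    thus "w \<in> Nb v" using Nb_mem by simp
  qed
  show "Nb v \<subseteq> ext [v]"
  proof
    fix w assume "w \<in> Nb v"
    hence e: "{v,w} \<in> snd G" using Nb_mem by simp
    hence "w \<noteq> v" using noloop by blast
    hence "ipath G ([v] @ [w])" using ipath_ext[OF ipath_single'[OF v], of w] e k1 by simp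
    thus "w \<in> ext [v]" by (simp add: ext_def)
  qed
qed

lemma ext2:
  assumes s: "ipath G s" and c2: "2 \<le> length s" and ck: "length s < k"
  shows "ext s = Nb (last s) - {s!(length s - 2)}"
proof
  let ?L = "length s - 1"
  have "s \<noteq> []" using c2 by auto
  hence lastL: "last s = s!?L" by (simp add: last_conv_nth)
  have ds: "distinct s" using s by (simp add: ipath_def)
  show "ext s \<subseteq> Nb (last s) - {s!(length s - 2)}"
  proof
    fix w assume "w \<in> ext s"
    hence t: "ipath G (s @ [w])" by (simp add: ext_def)
    have "{(s@[w])!?L, (s@[w])!Suc ?L} \<in> snd G" using ipath_edge[OF t, of ?L] c2 by simp
    moreover have "Suc ?L = length s" "?L < length s" using c2 by auto
    ultimately have "{s!?L, w} \<in> snd G" by (simp add: nth_append)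
    hence "{last s, w} \<in> snd G" using lastL by simp
    moreover have "w \<notin> set s" using t by (simp add: ipath_def)
    moreover have "s!(length s - 2) \<in> set s" using c2 by simp
    ultimately show "w \<in> Nb (last s) - {s!(length s - 2)}" using Nb_mem by auto
  qed
  show "Nb (last s) - {s!(length s - 2)} \<subseteq> ext s"
  proof
    fix w assume w: "w \<in> Nb (last s) - {s!(length s - 2)}"
    hence e: "{last s, w} \<in> snd G" using Nb_mem by simp
    have "w \<notin> set s"
    proof
      assume "w \<in> set s"
      then obtain j where j: "j < length s" "w = s!j" by (auto simp: in_set_conv_nth)
      have "{s!?L, s!j} \<in> snd G" using e lastL j by simp
      hence "j = Suc ?L \<or> ?L = Suc j" using ipath_adjI[OF s, of ?L j] j c2 by simp
      hence "j = length s - 2" using j by auto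
      thus False using w j by simp
    qed
    thus "w \<in> ext s" using ipath_ext[OF s \<open>s \<noteq> []\<close> _ e ck] by (simp add: ext_def)
  qed
qed

lemma W_Suc:
  assumes c1: "1 \<le> c" and ck: "c < k"
  shows "card (W (Suc c)) = (\<Sum>s\<in>W c. card (ext s))"
proof -
  have eq: "W (Suc c) = (\<Union>s\<in>W c. (\<lambda>w. s @ [w]) ` ext s)"
  proof
    show "W (Suc c) \<subseteq> (\<Union>s\<in>W c. (\<lambda>w. s @ [w]) ` ext s)"
    proof
      fix t assume t: "t \<in> W (Suc c)"
      hence it: "ipath G t" and lt: "length t = Suc c" by (auto simp: W_def)
      hence tne: "t \<noteq> []" by auto
      have tt: "t = butlast t @ [last t]" using tne by simp
      hence "ipath G (butlast t @ [last t])" using it by simp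
      hence "ipath G (butlast t)" by (rule ipath_appendD)
      moreover have "length (butlast t) = c" using lt by simp
      moreover have "last t \<in> ext (butlast t)" using it tt by (simp add: ext_def)
      ultimately show "t \<in> (\<Union>s\<in>W c. (\<lambda>w. s @ [w]) ` ext s)" using tt by (auto simp: W_def)
    qed
    show "(\<Union>s\<in>W c. (\<lambda>w. s @ [w]) ` ext s) \<subseteq> W (Suc c)" by (auto simp: W_def ext_def)
  qed
  have finext: "finite (ext s)" for s
  proof (rule finite_subset)
    show "ext s \<subseteq> fst G" by (auto simp: ext_def ipath_def)
  qed (rule finV)
  have "card (\<Union>s\<in>W c. (\<lambda>w. s @ [w]) ` ext s) = (\<Sum>s\<in>W c. card ((\<lambda>w. s @ [w]) ` ext s))"
  proof (rule card_UN_disjoint)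
    show "finite (W c)" by (rule fin_W)
    show "\<forall>i\<in>W c. finite ((\<lambda>w. i @ [w]) ` ext i)" using finext by simp
    show "\<forall>i\<in>W c. \<forall>j\<in>W c. i \<noteq> j \<longrightarrow> (\<lambda>w. i @ [w]) ` ext i \<inter> (\<lambda>w. j @ [w]) ` ext j = {}"
      by auto
  qed
  also have "\<dots> = (\<Sum>s\<in>W c. card (ext s))"
    by (intro sum.cong refl card_image) (auto simp: inj_on_def)
  finally show ?thesis using eq by simp
qed

end

context mdg begin

lemma deg_pos_nbr: "degree G v \<noteq> 0 \<Longrightarrow> \<exists>w. {v,w} \<in> snd G"
  unfolding deg_Nb using Nb_mem by (metis card.empty ex_in_conv)

lemma from_deg1_exists:
  assumes v: "v \<in> fst G" "degree G v = 1"
  shows "1 \<le> c \<Longrightarrow> c \<le> k - 1 \<Longrightarrow> \<exists>s. ipath G s \<and> length s = c \<and> s!0 = v"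
proof (induction c)
  case 0 thus ?case by simp
next
  case (Suc c)
  show ?case
  proof (cases "c = 0")
    case True thus ?thesis using ipath_single'[OF v(1)] by auto
  next
    case False
    then obtain s where s: "ipath G s" "length s = c" "s!0 = v" using Suc by auto
    have ck: "c < k" "c + 1 \<le> k - 1" using Suc.prems by auto
    have sne: "s \<noteq> []" using s False by auto
    let ?L = "c - 1"
    have lastL: "last s = s!?L" using sne s by (simp add: last_conv_nth)
    show ?thesis
    proof (cases "c = 1")
      case True
      hence s1: "s = [v]" using s by (cases s) auto
      have "\<exists>w. {v,w} \<in> snd G" using deg_pos_nbr[of v] v(2) by simp
      then obtain w where w: "{v,w} \<in> snd G" by blast
      hence "w \<noteq> v" using noloop by blast
      hence "ipath G (s @ [w])" using ipath_ext[OF s(1) sne, of w] w s1 ck by simp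
      thus ?thesis using s s1 by (intro exI[of _ "s @ [w]"]) simp
    next
      case False
      hence c2: "2 \<le> c" using \<open>c \<noteq> 0\<close> by simp
      let ?u = "s!?L" and ?p = "s!(c - 2)"
      have i1: "Suc (c - 2) < length s" and i2: "Suc (c - 2) = c - 1" using c2 s(2) by auto
      have pu: "{?p, ?u} \<in> snd G" using ipath_edge[OF s(1) i1] i2 by simp
      have pN: "?p \<in> Nb ?u" using pu Nb_mem by (simp add: insert_commute)
      have Nne: "degree G ?u \<noteq> 0"
      proof
        assume "degree G ?u = 0"
        hence "Nb ?u = {}" using deg_Nb fin_Nb by simp
        thus False using pN by simp
      qed
      have uV: "?u \<in> fst G" using s sne by (auto simp: ipath_def)
      show ?thesis
      proof (cases "degree G ?u = 2")
        case True
        have c2N: "card (Nb ?u) = 2" using True deg_Nb by simp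
        have "Nb ?u - {?p} \<noteq> {}"
        proof
          assume "Nb ?u - {?p} = {}"
          hence "Nb ?u \<subseteq> {?p}" by blast
          hence "card (Nb ?u) \<le> card {?p}" by (rule card_mono[rotated]) simp
          thus False using c2N by simp
        qed
        then obtain w where w: "w \<in> Nb ?u" "w \<noteq> ?p" by blast
        have e: "{last s, w} \<in> snd G" using w lastL Nb_mem by simp
        have "w \<in> ext s" using ext2[OF s(1)] c2 s(2) ck w lastL by simp
        hence "ipath G (s @ [w])" by (simp add: ext_def)
        moreover have "(s @ [w])!0 = v" using s sne by (simp add: nth_append length_greater_0_conv[symmetric])
        ultimately show ?thesis using s by (intro exI[of _ "s @ [w]"]) simp
      next
        case False
        have closed: "\<forall>x\<in>set s. \<forall>y. {x,y} \<in> snd G \<longrightarrow> y \<in> set s"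
        proof (intro ballI allI impI)
          fix x y assume x: "x \<in> set s" and e: "{x,y} \<in> snd G"
          then obtain i where i: "i < c" "x = s!i" using s by (auto simp: in_set_conv_nth)
          have e': "{y, s!i} \<in> snd G" using e i by (simp add: insert_commute)
          show "y \<in> set s"
          proof (cases "i = 0")
            case True
            have "{s!1, s!0} \<in> snd G" using ipath_edge[OF s(1), of 0] c2 s(2) by (simp add: insert_commute)
            hence "y = s!1" using nb1[of "s!0" "s!1" y] v s e' True by simp
            thus ?thesis using c2 s(2) by simp
          next
            case False
            show ?thesis
            proof (cases "i = ?L")
              case True
              have "degree G ?u \<le> 1"
              proof -
                have "degree G ?u \<le> 2" using deg2 uV by blast
                moreover note Nne
                ultimately show ?thesis using \<open>degree G ?u \<noteq> 2\<close> by simp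
              qed
              hence "y = ?p" using nb1[of ?u ?p y] pu e' True by simp
              thus ?thesis using c2 s(2) by simp
            next
              case False
              hence "Suc i < length s" using i s(2) by simp
              hence "y = s!(i-1) \<or> y = s!Suc i" using interior_nbr[OF s(1)] \<open>i \<noteq> 0\<close> e' by simp
              thus ?thesis using \<open>Suc i < length s\<close> by auto
            qed
          qed
        qed
        have "s!0 \<in> set s" using sne by simp
        hence "v \<in> set s" using s by simp
        hence "card (set s) \<ge> k - 1" using path_big[OF v(1) _ _ _ closed] v by simp
        moreover have "card (set s) = c" using ipath_len[OF s(1)] s by simp
        ultimately show ?thesis using ck by simp
      qed
    qed
  qed
qed

lemma from_deg1_unique:
  assumes v: "degree G v = 1" and s: "ipath G s" and t: "ipath G t" and len: "length s = length t"
    and "0 < length s" and hs: "s!0 = v" and ht: "t!0 = v"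
  shows "s = t"
proof (rule ipath_det[OF s t len])
  show "s!0 = t!0" using hs ht by simp
  assume l1: "1 < length s"
  have "{s!1, v} \<in> snd G" using ipath_edge[OF s, of 0] l1 hs by (simp add: insert_commute)
  moreover have "{t!1, v} \<in> snd G" using ipath_edge[OF t, of 0] l1 len ht by (simp add: insert_commute)
  moreover have "degree G v \<le> 1" using v by simp
  ultimately show "s!1 = t!1" using nb1 by blast
qed

end

context mdg begin

lemma W1_bij: "bij_betw (\<lambda>v. [v]) (fst G) (W 1)"
proof (rule bij_betw_byWitness[where f' = "\<lambda>s. s!0"])
  show "\<forall>a\<in>fst G. [a] ! 0 = a" by simp
  show "\<forall>s\<in>W 1. [s!0] = s" by (auto simp: W_def length_Suc_conv)
  show "(\<lambda>v. [v]) ` fst G \<subseteq> W 1" using ipath_single' by (auto simp: W_def)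
  show "(\<lambda>s. s!0) ` W 1 \<subseteq> fst G" by (auto simp: W_def ipath_def)
qed

lemma W2: assumes "1 < k" shows "card (W 2) = (\<Sum>v\<in>fst G. degree G v)"
proof -
  have "card (W 2) = (\<Sum>s\<in>W 1. card (ext s))" using W_Suc[of 1] assms by (simp add: numeral_2_eq_2)
  also have "\<dots> = (\<Sum>v\<in>fst G. card (ext [v]))"
    using sum.reindex_bij_betw[OF W1_bij, of "\<lambda>s. card (ext s)"] by simp
  also have "\<dots> = (\<Sum>v\<in>fst G. degree G v)"
    using ext1 assms deg_Nb by (intro sum.cong) auto
  finally show ?thesis .
qed

lemma start_card:
  assumes v: "v \<in> fst G" "degree G v = 1" and c: "1 \<le> c" "c \<le> k - 1"
  shows "card {s\<in>W c. s!0 = v} = 1"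
proof -
  obtain s where s: "ipath G s" "length s = c" "s!0 = v" using from_deg1_exists[OF v c] by blast
  have "{s\<in>W c. s!0 = v} = {s}"
  proof
    show "{s} \<subseteq> {s\<in>W c. s!0 = v}" using s by (simp add: W_def)
    show "{s\<in>W c. s!0 = v} \<subseteq> {s}"
    proof
      fix t assume "t \<in> {s\<in>W c. s!0 = v}"
      hence t: "ipath G t" "length t = c" "t!0 = v" by (auto simp: W_def)
      have "t = s" using from_deg1_unique[OF v(2) t(1) s(1)] t s c by simp
      thus "t \<in> {s}" by simp
    qed
  qed
  thus ?thesis by simp
qed

lemma W_rec:
  assumes c2: "2 \<le> c" and ck: "c < k"
  shows "card (W (Suc c)) = card (W c) - card {v\<in>fst G. degree G v = 1}"
proof -
  let ?V1 = "{v\<in>fst G. degree G v = 1}"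
  have dl: "degree G (last s) = 1 \<or> degree G (last s) = 2" and
       ce: "card (ext s) = degree G (last s) - 1" if s: "s \<in> W c" for s
  proof -
    have ip: "ipath G s" and ls: "length s = c" using s by (auto simp: W_def)
    have sne: "s \<noteq> []" using ls c2 by auto
    have e: "ext s = Nb (last s) - {s!(length s - 2)}" using ext2[OF ip] ls c2 ck by simp
    have i1: "Suc (c - 2) < length s" and i2: "Suc (c - 2) = length s - 1" using c2 ls by auto
    have "{s!(c-2), s!(length s - 1)} \<in> snd G" using ipath_edge[OF ip i1] i2 by simp
    moreover have "last s = s!(length s - 1)" using sne by (simp add: last_conv_nth)
    ultimately have pN: "s!(length s - 2) \<in> Nb (last s)" using ls Nb_mem by (simp add: insert_commute)
    have "card (ext s) = card (Nb (last s)) - 1" using e pN fin_Nb by simp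
    thus "card (ext s) = degree G (last s) - 1" using deg_Nb by simp
    have "last s \<in> fst G" using ip sne by (auto simp: ipath_def)
    hence "degree G (last s) \<le> 2" using deg2 by blast
    moreover have "degree G (last s) \<noteq> 0" using pN deg_Nb fin_Nb by auto
    ultimately show "degree G (last s) = 1 \<or> degree G (last s) = 2" by linarith
  qed
  have "card (W (Suc c)) = (\<Sum>s\<in>W c. card (ext s))" using W_Suc c2 ck by simp
  also have "\<dots> = (\<Sum>s\<in>W c. if degree G (last s) = 2 then 1 else 0)"
  proof (rule sum.cong[OF refl])
    fix s assume "s \<in> W c"
    thus "card (ext s) = (if degree G (last s) = 2 then 1 else 0)" using dl[of s] ce[of s] by auto
  qed
  also have "\<dots> = card {s\<in>W c. degree G (last s) = 2}"
  proof -
    have "W c \<inter> {s. degree G (last s) = 2} = {s\<in>W c. degree G (last s) = 2}" by auto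
    thus ?thesis using fin_W by (simp add: sum.If_cases)
  qed
  finally have a: "card (W (Suc c)) = card {s\<in>W c. degree G (last s) = 2}" .
  have part: "card (W c) = card {s\<in>W c. degree G (last s) = 2} + card {s\<in>W c. degree G (last s) = 1}"
  proof -
    have "W c = {s\<in>W c. degree G (last s) = 2} \<union> {s\<in>W c. degree G (last s) = 1}" using dl by auto
    moreover have "{s\<in>W c. degree G (last s) = 2} \<inter> {s\<in>W c. degree G (last s) = 1} = {}" by auto
    ultimately show ?thesis using fin_W card_Un_disjoint
      by (metis (no_types, lifting) finite_Un)
  qed
  have rev_eq: "card {s\<in>W c. degree G (last s) = 1} = card {s\<in>W c. degree G (s!0) = 1}"
  proof (rule bij_betw_same_card[of rev])
    show "bij_betw rev {s\<in>W c. degree G (last s) = 1} {s\<in>W c. degree G (s!0) = 1}"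
    proof (rule bij_betw_byWitness[where f' = rev])
      show "\<forall>a\<in>{s\<in>W c. degree G (last s) = 1}. rev (rev a) = a" by simp
      show "\<forall>a\<in>{s\<in>W c. degree G (s!0) = 1}. rev (rev a) = a" by simp
      show "rev ` {s\<in>W c. degree G (last s) = 1} \<subseteq> {s\<in>W c. degree G (s!0) = 1}"
      proof
        fix t assume "t \<in> rev ` {s\<in>W c. degree G (last s) = 1}"
        then obtain s where s: "s \<in> W c" "degree G (last s) = 1" "t = rev s" by blast
        have "s \<noteq> []" using s c2 by (auto simp: W_def)
        hence "rev s ! 0 = last s" by (simp add: hd_conv_nth[symmetric] hd_rev)
        moreover have "ipath G (rev s)" using s ipath_rev[of G s] by (simp add: W_def)
        ultimately show "t \<in> {s\<in>W c. degree G (s!0) = 1}" using s by (auto simp: W_def)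
      qed
      show "rev ` {s\<in>W c. degree G (s!0) = 1} \<subseteq> {s\<in>W c. degree G (last s) = 1}"
      proof
        fix t assume "t \<in> rev ` {s\<in>W c. degree G (s!0) = 1}"
        then obtain s where s: "s \<in> W c" "degree G (s!0) = 1" "t = rev s" by blast
        have "s \<noteq> []" using s c2 by (auto simp: W_def)
        hence "last (rev s) = s!0" by (simp add: last_rev hd_conv_nth)
        moreover have "ipath G (rev s)" using s ipath_rev[of G s] by (simp add: W_def)
        ultimately show "t \<in> {s\<in>W c. degree G (last s) = 1}" using s by (auto simp: W_def)
      qed
    qed
  qed
  have "{s\<in>W c. degree G (s!0) = 1} = (\<Union>v\<in>?V1. {s\<in>W c. s!0 = v})"
  proof
    show "{s\<in>W c. degree G (s!0) = 1} \<subseteq> (\<Union>v\<in>?V1. {s\<in>W c. s!0 = v})"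
    proof
      fix s assume s: "s \<in> {s\<in>W c. degree G (s!0) = 1}"
      hence "0 < length s" "set s \<subseteq> fst G" using c2 by (auto simp: W_def ipath_def)
      hence "s!0 \<in> fst G" by (meson nth_mem subsetD)
      thus "s \<in> (\<Union>v\<in>?V1. {s\<in>W c. s!0 = v})" using s by blast
    qed
  qed auto
  moreover have "card (\<Union>v\<in>?V1. {s\<in>W c. s!0 = v}) = (\<Sum>v\<in>?V1. card {s\<in>W c. s!0 = v})"
    using finV fin_W by (intro card_UN_disjoint) auto
  moreover have "(\<Sum>v\<in>?V1. card {s\<in>W c. s!0 = v}) = (\<Sum>v\<in>?V1. 1)"
    using start_card c2 ck by (intro sum.cong) auto
  ultimately have "card {s\<in>W c. degree G (s!0) = 1} = card ?V1" by simp
  thus ?thesis using a part rev_eq by simp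
qed

lemma no_isolated: "3 \<le> k \<Longrightarrow> v \<in> fst G \<Longrightarrow> degree G v \<noteq> 0"
proof
  assume k: "3 \<le> k" and v: "v \<in> fst G" and d: "degree G v = 0"
  have "Nb v = {}" using d deg_Nb fin_Nb by simp
  hence cl: "\<forall>x\<in>{v}. \<forall>u. {x,u} \<in> snd G \<longrightarrow> u \<in> {v}" using Nb_mem by auto
  have "card {v} \<ge> k - 1" using path_big[OF v _ _ _ cl] d by simp
  thus False using k by simp
qed

lemma V1_card:
  assumes k: "3 \<le> k"
  shows "card {v\<in>fst G. degree G v = 1} + 2 * card (snd G) = 2 * card (fst G)"
proof -
  let ?V1 = "{v\<in>fst G. degree G v = 1}"
  have "2 * card (snd G) = card (W 2)" using W_Iv[of 2] Iv2 k by simp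
  also have "\<dots> = (\<Sum>v\<in>fst G. degree G v)" using W2 k by simp
  also have "\<dots> = (\<Sum>v\<in>fst G. if degree G v = 1 then 1 else 2)"
  proof (rule sum.cong[OF refl])
    fix v assume v: "v \<in> fst G"
    have "degree G v \<le> 2" using deg2 v by blast
    moreover have "degree G v \<noteq> 0" using no_isolated k v by blast
    ultimately show "degree G v = (if degree G v = 1 then 1 else 2)" by auto
  qed
  also have "\<dots> = card ?V1 + 2 * card (fst G - ?V1)"
  proof -
    have "fst G \<inter> {v. degree G v = 1} = ?V1" "fst G \<inter> - {v. degree G v = 1} = fst G - ?V1" by auto
    thus ?thesis using finV by (simp add: sum.If_cases)
  qed
  also have "card (fst G - ?V1) = card (fst G) - card ?V1"
    using finV by (intro card_Diff_subset) auto
  finally have "2 * card (snd G) = card ?V1 + 2 * (card (fst G) - card ?V1)" .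
  moreover have "card ?V1 \<le> card (fst G)" using finV by (intro card_mono) auto
  ultimately show ?thesis by linarith
qed

end

lemma Iv_eq:
  assumes m1: "mdg G k" and m2: "mdg G' k"
    and n: "card (fst G) = card (fst G')" and m: "card (snd G) = card (snd G')"
    and a: "a \<le> k"
  shows "card (Iv G a) = card (Iv G' a)"
proof -
  interpret g1: mdg G k by (rule m1)
  interpret g2: mdg G' k by (rule m2)
  consider "a = 0" | "a = 1" | "a = 2" | "3 \<le> a" by linarith
  thus ?thesis
  proof cases
    case 1 thus ?thesis using g1.Iv0 g2.Iv0 by simp
  next
    case 2 thus ?thesis using g1.Iv1 g2.Iv1 n by simp
  next
    case 3 thus ?thesis using g1.Iv2 g2.Iv2 m by simp
  next
    case 4
    hence k3: "3 \<le> k" using a by simp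
    have v1: "card {v\<in>fst G. degree G v = 1} = card {v\<in>fst G'. degree G' v = 1}"
      using g1.V1_card[OF k3] g2.V1_card[OF k3] n m by simp
    have W: "2 \<le> c \<Longrightarrow> c \<le> k \<Longrightarrow> card (g1.W c) = card (g2.W c)" for c
    proof (induction c)
      case 0 thus ?case by simp
    next
      case (Suc c)
      show ?case
      proof (cases "c = 1")
        case True
        thus ?thesis using g1.W_Iv[of 2] g2.W_Iv[of 2] g1.Iv2 g2.Iv2 m k3 by (simp add: numeral_2_eq_2)
      next
        case False
        hence c2: "2 \<le> c" "c < k" using Suc.prems by auto
        thus ?thesis using g1.W_rec[OF c2] g2.W_rec[OF c2] Suc v1 by simp
      qed
    qed
    have "2 * card (Iv G a) = 2 * card (Iv G' a)"
      using g1.W_Iv[of a] g2.W_Iv[of a] W[of a] 4 a by simp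
    thus ?thesis by simp
  qed
qed

lemma famset_empty: "famset G {#} = {{}}"
proof
  show "famset G {#} \<subseteq> {{}}"
  proof
    fix P assume "P \<in> famset G {#}"
    hence "fam G P" "prof P = {#}" by (auto simp: famset_def)
    hence "P = {}" using prof_empty_iff by (auto simp: fam_def)
    thus "P \<in> {{}}" by simp
  qed
  show "{{}} \<subseteq> famset G {#}" by (simp add: famset_def fam_def prof_def)
qed

lemma famset_eq:
  assumes m1: "mdg G k" and m2: "mdg G' k"
    and n: "card (fst G) = card (fst G')" and m: "card (snd G) = card (snd G')"
  shows "size M = N \<Longrightarrow> sum_mset M \<le> k \<Longrightarrow> card (famset G M) = card (famset G' M)"
proof (induction N arbitrary: M rule: less_induct)
  case (less N)
  interpret g1: mdg G k by (rule m1)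
  interpret g2: mdg G' k by (rule m2)
  show ?case
  proof (cases M)
    case empty thus ?thesis by (simp add: famset_empty)
  next
    case (add a M0)
    have sk: "sum_mset M0 + a \<le> k" using less.prems add by simp
    have IH0: "card (famset G M0) = card (famset G' M0)"
      using less.IH[of "size M0" M0] less.prems add by simp
    have Iva: "card (Iv G a) = card (Iv G' a)" using Iv_eq[OF m1 m2 n m] sk by simp
    have bad: "card (g1.BadS M0 a) = card (g2.BadS M0 a)"
    proof -
      have "card (g1.BadS M0 a) = (\<Sum>MJ\<in>g1.SM M0. \<Sum>b\<in>{..k}.
          card (famset G (add_mset b (M0 - MJ))) * count (add_mset b (M0 - MJ)) b * cstd MJ a b)"
        using g1.H3[OF sk] .
      also have "\<dots> = (\<Sum>MJ\<in>g2.SM M0. \<Sum>b\<in>{..k}.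
          card (famset G' (add_mset b (M0 - MJ))) * count (add_mset b (M0 - MJ)) b * cstd MJ a b)"
      proof (intro sum.cong refl)
        fix MJ b assume MJ: "MJ \<in> g2.SM M0" and b: "b \<in> {..k}"
        have sub: "MJ \<subseteq># M0" and ne: "MJ \<noteq> {#}" using MJ by (auto simp: g2.SM_def)
        show "card (famset G (add_mset b (M0 - MJ))) * count (add_mset b (M0 - MJ)) b * cstd MJ a b =
          card (famset G' (add_mset b (M0 - MJ))) * count (add_mset b (M0 - MJ)) b * cstd MJ a b"
        proof (cases "cstd MJ a b = 0")
          case True thus ?thesis by simp
        next
          case False
          hence bb: "b \<le> a + sum_mset MJ" by (rule cstd_bound)
          have s1: "sum_mset (M0 - MJ) = sum_mset M0 - sum_mset MJ" using sub by (rule sum_mset_diff)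
          have s2: "sum_mset MJ \<le> sum_mset M0" using sub by (auto simp: subset_mset.le_iff_add)
          have "sum_mset (add_mset b (M0 - MJ)) \<le> k" using s1 s2 bb sk by simp
          moreover have "size (add_mset b (M0 - MJ)) < N"
          proof -
            have "size (M0 - MJ) = size M0 - size MJ" using sub by (rule size_Diff_submset)
            moreover have "size MJ \<ge> 1" using ne by (cases MJ) auto
            moreover have "size MJ \<le> size M0" using sub by (rule size_mset_mono)
            ultimately show ?thesis using less.prems add by simp
          qed
          ultimately have "card (famset G (add_mset b (M0 - MJ))) = card (famset G' (add_mset b (M0 - MJ)))"
            using less.IH[of "size (add_mset b (M0 - MJ))" "add_mset b (M0 - MJ)"] by simp
          thus ?thesis by simp
        qed
      qed
      also have "\<dots> = card (g2.BadS M0 a)" using g2.H3[OF sk] by simp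
      finally show ?thesis .
    qed
    have gp: "card (g1.GP M0 a) = card (g2.GP M0 a)"
      using g1.H2[of M0 a] g2.H2[of M0 a] IH0 Iva bad by simp
    have "card (famset G M) * count M a = card (famset G' M) * count M a"
      using g1.H1[of M0 a] g2.H1[of M0 a] gp add by simp
    moreover have "count M a > 0" using add by simp
    ultimately show ?thesis by simp
  qed
qed

theorem corollary3p2:
  fixes k :: nat and G :: "'a graph" and G' :: "'b graph"
  assumes "k \<ge> 1"
    and "simple_graph G" and "simple_graph G'"
    and "max_degree_two G" and "max_degree_two G'"
    and "\<not> regular G" and "\<not> regular G'"
    and "card (fst G) = card (fst G')" and "card (snd G) = card (snd G')"
    and "\<And>C. cycle_component G C \<Longrightarrow> card C > k"
    and "\<And>C. cycle_component G' C \<Longrightarrow> card C > k"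
    and "\<And>C. path_component G C \<Longrightarrow> card C \<ge> k - 1"
    and "\<And>C. path_component G' C \<Longrightarrow> card C \<ge> k - 1"
  shows "same_deck k G G'"
proof -
  have m1: "mdg G k"
    using assms(2,4,10,12) by (unfold_locales) (auto simp: max_degree_two_def)
  have m2: "mdg G' k"
    using assms(3,5,11,13) by (unfold_locales) (auto simp: max_degree_two_def)
  show ?thesis
  proof (rule deck_from_famset[OF m1 m2])
    fix M :: "nat multiset" assume "sum_mset M = k"
    thus "card (famset G M) = card (famset G' M)"
      using famset_eq[OF m1 m2 assms(8,9)] by simp
  qed
qed


end
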